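(* Let $I=(m_1,\dots,m_k,T_1,\dots,T_n)$ be an instance of the VSPA problem with $0<m_1\le m_2\le\dots\le m_k$, $n=\sum_r m_r$, $T_i\in\{H,L\}$ for all $i$ where $0\le H<L$, and $T_1=H$, and let $g$ be a nondecreasing function. Let $\gamma^*$ be the agent to which Algorithm 1, run on $(m_1,\dots,m_k,T_1,\dots,T_n)$, assigns task $1$ (i.e. $\gamma^*=\mathrm{TA}(m_1,\dots,m_k;T_1,\dots,T_n)$). Then for every valid decision sequence $\mathbf{x}=(x_1,\dots,x_n)$ with $x_1\ne\gamma^*$ there exists a valid decision sequence $\mathbf{x}^*=(\gamma^*,x^*_2,\dots,x^*_n)$ with $\mathrm{COST}_I(\mathbf{x}^* )\le\mathrm{COST}_I(\mathbf{x})$.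
   Context: Variable-Sized Positional Allocation (VSPA) problem: an instance consists of capacities $m_1,\dots,m_k$ (positive integers) and intrinsic task costs $T_1,\dots,T_n\ge 0$ with $n=\sum_r m_r$, together with a nondecreasing function $g:\mathbb{N}\to\mathbb{R}_{\ge0}$ (in the original problem $g(q)=f(m+1-q)$ for a nonincreasing positional function $f$). A decision sequence $\mathbf{x}\in[k]^n$ assigns task $t$ to agent $x_t$; it is valid if each agent $r$ receives exactly $m_r$ tasks. When task $t$ is assigned, agent $x_t$ has remaining capacity $q_t=m_{x_t}-|\{s<t: x_s=x_t\}|$, and the assignment costs $g(q_t)\cdot T_t$. The total cost is $\mathrm{COST}_I(\mathbf{x})=\sum_{t=1}^n g(q_t)\,T_t$. Subroutine $\mathrm{TA}(m_1,\dots,m_k;\,S_1,\dots,S_N)$ (ThresholdAllocation, used by Algorithm 1 for the first task), with the convention $m_0:=0$: for $\gamma=k,k-1,\dots,1$: if $m_\gamma=m_{\gamma-1}$, go to the next $\gamma$; otherwise, for $h=\gamma,\gamma+1,\dots,k$: let $Z_L=\sum_{i=1}^{h-1}\min\{m_i,m_{\gamma-1}\}$ and $Z_H=\sum_{i=\gamma}^{h}(m_i-m_{\gamma-1})$; if $|\{i\in\{1,\dots,Z_L+Z_H\}: S_i>S_1\}|\ge Z_L$, return $\gamma$. *)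

theory Defs
  imports Complex_Main
begin

text \<open>Agents are indexed 1..k (capacities m 1, ..., m k), tasks are indexed 1..n
  (intrinsic costs T 1, ..., T n). A decision sequence is a function x with x t the
  agent of task t (only its values on 1..n matter).\<close>

definition valid_seq :: "nat \<Rightarrow> (nat \<Rightarrow> nat) \<Rightarrow> nat \<Rightarrow> (nat \<Rightarrow> nat) \<Rightarrow> bool" where
  "valid_seq k m n x \<longleftrightarrow>
     (\<forall>t\<in>{1..n}. x t \<in> {1..k}) \<and>
     (\<forall>r\<in>{1..k}. card {t\<in>{1..n}. x t = r} = m r)"

definition rem_cap :: "(nat \<Rightarrow> nat) \<Rightarrow> (nat \<Rightarrow> nat) \<Rightarrow> nat \<Rightarrow> nat" where
  "rem_cap m x t = m (x t) - card {s\<in>{1..<t}. x s = x t}"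

definition COST :: "(nat \<Rightarrow> real) \<Rightarrow> (nat \<Rightarrow> nat) \<Rightarrow> nat \<Rightarrow> (nat \<Rightarrow> real) \<Rightarrow> (nat \<Rightarrow> nat) \<Rightarrow> real" where
  "COST g m n T x = (\<Sum>t=1..n. g (rem_cap m x t) * T t)"

definition m0 :: "(nat \<Rightarrow> nat) \<Rightarrow> nat \<Rightarrow> nat" where
  "m0 m i = (if i = 0 then 0 else m i)"

definition TA_accepts :: "nat \<Rightarrow> (nat \<Rightarrow> nat) \<Rightarrow> (nat \<Rightarrow> real) \<Rightarrow> nat \<Rightarrow> bool" where
  "TA_accepts k m S \<gamma> \<longleftrightarrow>
     m0 m \<gamma> \<noteq> m0 m (\<gamma> - 1) \<and>
     (\<exists>h\<in>{\<gamma>..k}.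
        let ZL = (\<Sum>i=1..h-1. min (m i) (m0 m (\<gamma> - 1)));
            ZH = (\<Sum>i=\<gamma>..h. m i - m0 m (\<gamma> - 1))
        in card {i\<in>{1..ZL+ZH}. S i > S 1} \<ge> ZL)"

text \<open>TA scans gamma = k, k-1, ..., 1 and returns the first accepted gamma,
  i.e. the greatest accepted gamma in 1..k.\<close>
definition TA :: "nat \<Rightarrow> (nat \<Rightarrow> nat) \<Rightarrow> (nat \<Rightarrow> real) \<Rightarrow> nat" where
  "TA k m S = (GREATEST \<gamma>. \<gamma> \<in> {1..k} \<and> TA_accepts k m S \<gamma>)"

end

theory Submission
  imports Defs
begin


definition hc :: "(nat \<Rightarrow> bool) \<Rightarrow> nat \<Rightarrow> nat" where "hc w t = card {i\<in>{1..t}. \<not> w i}"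
definition lc :: "(nat \<Rightarrow> bool) \<Rightarrow> nat \<Rightarrow> nat" where "lc w t = card {i\<in>{1..t}. w i}"

lemma card_shift:
  "card {i\<in>{1..Suc t}. P i} = (if P 1 then 1 else 0) + card {i\<in>{1..t}. P (Suc i)}"
proof -
  have eq: "{i\<in>{1..Suc t}. P i} = (if P 1 then {1} else {}) \<union> Suc ` {i\<in>{1..t}. P (Suc i)}"
  proof (intro set_eqI iffI)
    fix i assume "i \<in> {i\<in>{1..Suc t}. P i}"
    then show "i \<in> (if P 1 then {1} else {}) \<union> Suc ` {i\<in>{1..t}. P (Suc i)}"
      by (cases i) (auto simp: image_iff, metis One_nat_def Suc_leI neq0_conv)
  qed (auto split: if_splits)
  have "card ((if P 1 then {1} else {}) \<union> Suc ` {i\<in>{1..t}. P (Suc i)}) =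
        card (if P 1 then {1::nat} else {}) + card (Suc ` {i\<in>{1..t}. P (Suc i)})"
    by (rule card_Un_disjoint) auto
  also have "card (Suc ` {i\<in>{1..t}. P (Suc i)}) = card {i\<in>{1..t}. P (Suc i)}"
    by (rule card_image) auto
  finally show ?thesis using eq by simp
qed

lemma hc_lc: "hc w t + lc w t = t"
proof -
  have e: "{1..t} = {i\<in>{1..t}. \<not> w i} \<union> {i\<in>{1..t}. w i}" by auto
  have "card {i\<in>{1..t}. \<not> w i} + card {i\<in>{1..t}. w i} = card {1..t}"
    by (subst e, rule card_Un_disjoint[symmetric]) auto
  thus ?thesis by (simp add: hc_def lc_def)
qed

lemma lc_mono: "t \<le> t' \<Longrightarrow> lc w t \<le> lc w t'"
  unfolding lc_def by (rule card_mono) auto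
lemma hc_mono: "t \<le> t' \<Longrightarrow> hc w t \<le> hc w t'"
  unfolding hc_def by (rule card_mono) auto
lemma lc_le: "lc w t \<le> t" using hc_lc[of w t] by simp

lemma lc_Suc: "lc w (Suc t) = (if w 1 then 1 else 0) + lc (\<lambda>i. w (Suc i)) t"
  unfolding lc_def by (rule card_shift)
lemma hc_Suc: "hc w (Suc t) = (if w 1 then 0 else 1) + hc (\<lambda>i. w (Suc i)) t"
  unfolding hc_def using card_shift[of t "\<lambda>i. \<not> w i"] by simp



definition S0 :: "nat set \<Rightarrow> (nat \<Rightarrow> nat) \<Rightarrow> nat \<Rightarrow> nat" where
  "S0 A s c = (\<Sum>i\<in>{i\<in>A. s i < c}. s i)"
definition ex :: "nat set \<Rightarrow> (nat \<Rightarrow> nat) \<Rightarrow> nat \<Rightarrow> nat set" where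
  "ex A s c = {i\<in>A. c \<le> s i}"
definition esum :: "(nat \<Rightarrow> nat) \<Rightarrow> nat \<Rightarrow> nat set \<Rightarrow> nat" where
  "esum s c B = (\<Sum>i\<in>B. s i - (c - 1))"
definition Jset :: "nat set \<Rightarrow> (nat \<Rightarrow> nat) \<Rightarrow> nat \<Rightarrow> nat \<Rightarrow> nat set set" where
  "Jset A s c x = {B. B \<subseteq> ex A s c \<and> esum s c B \<le> x}"
definition Jf :: "nat set \<Rightarrow> (nat \<Rightarrow> nat) \<Rightarrow> nat \<Rightarrow> nat \<Rightarrow> nat" where
  "Jf A s c x = Max (card ` Jset A s c x)"
definition Ff :: "nat set \<Rightarrow> (nat \<Rightarrow> nat) \<Rightarrow> nat \<Rightarrow> nat \<Rightarrow> nat" where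
  "Ff A s c x = S0 A s c + (c - 1) * Jf A s c x"
definition Pp :: "nat set \<Rightarrow> (nat \<Rightarrow> nat) \<Rightarrow> nat \<Rightarrow> (nat \<Rightarrow> bool) \<Rightarrow> nat \<Rightarrow> nat \<Rightarrow> bool" where
  "Pp A s c w t v \<longleftrightarrow> v + Ff A s c (hc w t + v) < lc w t"
definition Vv :: "nat set \<Rightarrow> (nat \<Rightarrow> nat) \<Rightarrow> nat \<Rightarrow> (nat \<Rightarrow> bool) \<Rightarrow> nat" where
  "Vv A s c w = (LEAST v. \<forall>t \<le> sum s A. \<not> Pp A s c w t v)"

lemma finite_ex: "finite A \<Longrightarrow> finite (ex A s c)"
  unfolding ex_def by simp

lemma finite_Jset: "finite A \<Longrightarrow> finite (Jset A s c x)"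
proof -
  assume "finite A"
  hence "finite (Pow (ex A s c))" using finite_ex by simp
  moreover have "Jset A s c x \<subseteq> Pow (ex A s c)" unfolding Jset_def by auto
  ultimately show ?thesis by (rule finite_subset[rotated])
qed

lemma empty_Jset: "{} \<in> Jset A s c x"
  unfolding Jset_def esum_def by simp

lemma Jf_ge: "finite A \<Longrightarrow> B \<subseteq> ex A s c \<Longrightarrow> esum s c B \<le> x \<Longrightarrow> card B \<le> Jf A s c x"
  using finite_Jset[of A s c x] unfolding Jf_def by (intro Max_ge) (auto simp: Jset_def)

lemma Jf_obtain: "finite A \<Longrightarrow> \<exists>B. B \<subseteq> ex A s c \<and> esum s c B \<le> x \<and> card B = Jf A s c x"
proof -
  assume f: "finite A"
  have "Jf A s c x \<in> card ` Jset A s c x"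
    unfolding Jf_def using finite_Jset[OF f, of s c x] empty_Jset[of A s c x] by (intro Max_in) auto
  thus ?thesis unfolding Jset_def by auto
qed

lemma Jf_mono: "finite A \<Longrightarrow> x \<le> y \<Longrightarrow> Jf A s c x \<le> Jf A s c y"
proof -
  assume f: "finite A" and xy: "x \<le> y"
  obtain B where "B \<subseteq> ex A s c" "esum s c B \<le> x" "card B = Jf A s c x" using Jf_obtain[OF f] by blast
  thus ?thesis using Jf_ge[OF f, of B s c y] xy by simp
qed

lemma Jf_le_card: "finite A \<Longrightarrow> Jf A s c x \<le> card (ex A s c)"
proof -
  assume f: "finite A"
  obtain B where "B \<subseteq> ex A s c" "card B = Jf A s c x" using Jf_obtain[OF f] by blast
  thus ?thesis using card_mono[OF finite_ex[OF f]] by metis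
qed

lemma Ff_mono: "finite A \<Longrightarrow> x \<le> y \<Longrightarrow> Ff A s c x \<le> Ff A s c y"
  unfolding Ff_def using Jf_mono by simp

lemma Pp_anti: "finite A \<Longrightarrow> v1 \<le> v2 \<Longrightarrow> Pp A s c w t v2 \<Longrightarrow> Pp A s c w t v1"
  unfolding Pp_def using Ff_mono[of A "hc w t + v1" "hc w t + v2" s c] by simp

lemma Vv_ex: "\<forall>t \<le> sum s A. \<not> Pp A s c w t (sum s A)"
proof (intro allI impI)
  fix t assume "t \<le> sum s A"
  with lc_le[of w t] show "\<not> Pp A s c w t (sum s A)" unfolding Pp_def by linarith
qed

lemma Vv_prop: "\<forall>t \<le> sum s A. \<not> Pp A s c w t (Vv A s c w)"
  unfolding Vv_def by (rule LeastI_ex) (use Vv_ex in blast)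

lemma Vv_le: "(\<forall>t \<le> sum s A. \<not> Pp A s c w t v) \<Longrightarrow> Vv A s c w \<le> v"
  unfolding Vv_def by (rule Least_le)

lemma Vv_gt: "finite A \<Longrightarrow> t \<le> sum s A \<Longrightarrow> Pp A s c w t v \<Longrightarrow> v < Vv A s c w"
proof (rule ccontr)
  assume f: "finite A" and t: "t \<le> sum s A" and P: "Pp A s c w t v" and "\<not> v < Vv A s c w"
  hence "Pp A s c w t (Vv A s c w)" using Pp_anti[OF f, of "Vv A s c w" v] by simp
  thus False using Vv_prop[of s A c w] t by blast
qed

lemma Pp_0: "\<not> Pp A s c w 0 v"
  unfolding Pp_def lc_def by simp



lemma sum_dec:
  assumes "finite A" "r \<in> A" "0 < s r"
  shows "sum s A = Suc (sum (s(r := s r - 1)) A)"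
proof -
  have "sum s A = s r + sum s (A - {r})" using assms by (simp add: sum.remove)
  moreover have "sum (s(r := s r - 1)) A = (s r - 1) + sum (s(r := s r - 1)) (A - {r})"
    using assms by (simp add: sum.remove)
  moreover have "sum (s(r := s r - 1)) (A - {r}) = sum s (A - {r})"
    by (rule sum.cong) auto
  ultimately show ?thesis using assms(3) by simp
qed

lemma esum_upd_notin: "r \<notin> B \<Longrightarrow> esum (s(r := v)) c B = esum s c B"
  unfolding esum_def by (rule sum.cong) auto

lemma esum_insert: "finite B \<Longrightarrow> r \<notin> B \<Longrightarrow> esum s c (insert r B) = (s r - (c - 1)) + esum s c B"
  unfolding esum_def by simp

lemma esum_remove: "finite B \<Longrightarrow> r \<in> B \<Longrightarrow> esum s c B = (s r - (c - 1)) + esum s c (B - {r})"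
  unfolding esum_def by (simp add: sum.remove)

lemma F_small:
  assumes f: "finite A" and r: "r \<in> A" "0 < s r" "s r < c"
  shows "Ff A (s(r := s r - 1)) c x + 1 = Ff A s c x"
proof -
  let ?s = "s(r := s r - 1)"
  have sm: "{i\<in>A. ?s i < c} = {i\<in>A. s i < c}" using r by auto
  have "S0 A s c = Suc (S0 A ?s c)" unfolding S0_def sm
    by (rule sum_dec) (use f r in auto)
  moreover have ex: "ex A ?s c = ex A s c" unfolding ex_def using r by auto
  moreover have "Jset A ?s c x = Jset A s c x"
  proof -
    have "\<And>B. B \<subseteq> ex A s c \<Longrightarrow> esum ?s c B = esum s c B"
      by (rule esum_upd_notin) (use r in \<open>auto simp: ex_def\<close>)
    thus ?thesis unfolding Jset_def ex by auto
  qed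
  ultimately show ?thesis unfolding Ff_def Jf_def by simp
qed

lemma F_big:
  assumes f: "finite A" and r: "r \<in> A" "c \<le> s r" and c: "1 \<le> c"
  shows "Ff A (s(r := s r - 1)) c x \<le> Ff A s c (Suc x)"
proof (cases "s r = c")
  case False
  let ?s = "s(r := s r - 1)"
  have sm: "{i\<in>A. ?s i < c} = {i\<in>A. s i < c}" using r False by auto
  have S: "S0 A ?s c = S0 A s c" unfolding S0_def sm
    by (rule sum.cong) (use r False in auto)
  have ex: "ex A ?s c = ex A s c" unfolding ex_def using r False by auto
  obtain B where B: "B \<subseteq> ex A ?s c" "esum ?s c B \<le> x" "card B = Jf A ?s c x"
    using Jf_obtain[OF f] by blast
  have fB: "finite B" using B(1) finite_ex[OF f] finite_subset by blast
  have "esum s c B \<le> Suc x"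
  proof (cases "r \<in> B")
    case True
    have "esum s c B = (s r - (c - 1)) + esum s c (B - {r})" using esum_remove[OF fB True] .
    moreover have "esum ?s c B = (?s r - (c - 1)) + esum ?s c (B - {r})" using esum_remove[OF fB True] .
    moreover have "esum ?s c (B - {r}) = esum s c (B - {r})" by (rule esum_upd_notin) simp
    ultimately show ?thesis using B(2) r c by simp
  next
    case False
    thus ?thesis using B(2) esum_upd_notin[OF False] by simp
  qed
  hence "card B \<le> Jf A s c (Suc x)" using Jf_ge[OF f] B(1) ex by simp
  thus ?thesis unfolding Ff_def S using B(3) by simp
next
  case True
  let ?s = "s(r := s r - 1)"
  have sm: "{i\<in>A. ?s i < c} = insert r {i\<in>A. s i < c}" using r True c by auto
  have S: "S0 A ?s c = (c - 1) + S0 A s c" unfolding S0_def sm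
  proof -
    have "(\<Sum>i\<in>insert r {i \<in> A. s i < c}. ?s i) = ?s r + (\<Sum>i\<in>{i \<in> A. s i < c}. ?s i)"
      using f True by (intro sum.insert) auto
    also have "(\<Sum>i\<in>{i \<in> A. s i < c}. ?s i) = (\<Sum>i\<in>{i \<in> A. s i < c}. s i)"
      by (rule sum.cong) (use True in auto)
    finally show "(\<Sum>i\<in>insert r {i \<in> A. s i < c}. ?s i) = c - 1 + (\<Sum>i\<in>{i \<in> A. s i < c}. s i)"
      using True by simp
  qed
  have ex: "ex A ?s c = ex A s c - {r}" unfolding ex_def using r True c by auto
  obtain B where B: "B \<subseteq> ex A ?s c" "esum ?s c B \<le> x" "card B = Jf A ?s c x"
    using Jf_obtain[OF f] by blast
  have fB: "finite B" using B(1) finite_ex[OF f] finite_subset by blast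
  have rB: "r \<notin> B" using B(1) ex by auto
  have "esum s c (insert r B) = (s r - (c - 1)) + esum s c B" by (rule esum_insert[OF fB rB])
  also have "\<dots> = Suc (esum ?s c B)" using esum_upd_notin[OF rB] True c by simp
  finally have "esum s c (insert r B) \<le> Suc x" using B(2) by simp
  moreover have "insert r B \<subseteq> ex A s c" using B(1) ex r True by (auto simp: ex_def)
  ultimately have "card (insert r B) \<le> Jf A s c (Suc x)" using Jf_ge[OF f] by blast
  hence "Suc (Jf A ?s c x) \<le> Jf A s c (Suc x)" using B(3) fB rB by simp
  hence "(c - 1) * Suc (Jf A ?s c x) \<le> (c - 1) * Jf A s c (Suc x)" by (rule mult_le_mono2)
  thus ?thesis unfolding Ff_def S mult_Suc_right by linarith
qed



lemma F_min:
  assumes f: "finite A" and r: "r \<in> A" "c \<le> s r" and c: "1 \<le> c"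
    and mn: "\<forall>i\<in>A. c \<le> s i \<longrightarrow> s r \<le> s i"
  shows "Ff A s c (Suc x) \<le> Ff A (s(r := s r - 1)) c x"
proof (cases "s r = c")
  case False
  let ?s = "s(r := s r - 1)"
  have sm: "{i\<in>A. ?s i < c} = {i\<in>A. s i < c}" using r False by auto
  have S: "S0 A ?s c = S0 A s c" unfolding S0_def sm
    by (rule sum.cong) (use r False in auto)
  have ex: "ex A ?s c = ex A s c" unfolding ex_def using r False by auto
  obtain B where B: "B \<subseteq> ex A s c" "esum s c B \<le> Suc x" "card B = Jf A s c (Suc x)"
    using Jf_obtain[OF f] by blast
  have fB: "finite B" using B(1) finite_ex[OF f] finite_subset by blast
  have "card B \<le> Jf A ?s c x"
  proof (cases "r \<in> B")
    case True
    have "esum s c B = (s r - (c - 1)) + esum s c (B - {r})" using esum_remove[OF fB True] .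
    moreover have "esum ?s c B = (?s r - (c - 1)) + esum ?s c (B - {r})" using esum_remove[OF fB True] .
    moreover have "esum ?s c (B - {r}) = esum s c (B - {r})" by (rule esum_upd_notin) simp
    ultimately have "esum ?s c B \<le> x" using B(2) r c False by simp
    thus ?thesis using Jf_ge[OF f] B(1) ex by simp
  next
    case rB: False
    show ?thesis
    proof (cases "B = {}")
      case True thus ?thesis by simp
    next
      case False
      then obtain a where a: "a \<in> B" by blast
      let ?B = "insert r (B - {a})"
      have rB': "r \<notin> B - {a}" using rB by simp
      have fB': "finite (B - {a})" using fB by simp
      have "esum ?s c ?B = (?s r - (c - 1)) + esum ?s c (B - {a})" by (rule esum_insert[OF fB' rB'])
      also have "\<dots> = (s r - 1 - (c - 1)) + esum s c (B - {a})" using esum_upd_notin[OF rB'] by simp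
      finally have e1: "esum ?s c ?B = (s r - 1 - (c - 1)) + esum s c (B - {a})" .
      have e2: "esum s c B = (s a - (c - 1)) + esum s c (B - {a})" using esum_remove[OF fB a] .
      have "s r \<le> s a" using mn a B(1) by (auto simp: ex_def)
      hence "esum ?s c ?B < esum s c B" using e1 e2 r c False by simp
      hence "esum ?s c ?B \<le> x" using B(2) by simp
      moreover have "?B \<subseteq> ex A ?s c" using ex B(1) r by (auto simp: ex_def)
      ultimately have "card ?B \<le> Jf A ?s c x" using Jf_ge[OF f] by blast
      moreover have "card ?B = card B" using fB a rB' card_gt_0_iff[of B] by (auto simp: card_insert_if)
      ultimately show ?thesis by simp
    qed
  qed
  thus ?thesis unfolding Ff_def S using B(3) by simp
next
  case True
  let ?s = "s(r := s r - 1)"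
  have sm: "{i\<in>A. ?s i < c} = insert r {i\<in>A. s i < c}" using r True c by auto
  have S: "S0 A ?s c = (c - 1) + S0 A s c" unfolding S0_def sm
  proof -
    have "(\<Sum>i\<in>insert r {i \<in> A. s i < c}. ?s i) = ?s r + (\<Sum>i\<in>{i \<in> A. s i < c}. ?s i)"
      using f True by (intro sum.insert) auto
    also have "(\<Sum>i\<in>{i \<in> A. s i < c}. ?s i) = (\<Sum>i\<in>{i \<in> A. s i < c}. s i)"
      by (rule sum.cong) (use True in auto)
    finally show "(\<Sum>i\<in>insert r {i \<in> A. s i < c}. ?s i) = c - 1 + (\<Sum>i\<in>{i \<in> A. s i < c}. s i)"
      using True by simp
  qed
  have ex: "ex A ?s c = ex A s c - {r}" unfolding ex_def using r True c by auto
  obtain B where B: "B \<subseteq> ex A s c" "esum s c B \<le> Suc x" "card B = Jf A s c (Suc x)"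
    using Jf_obtain[OF f] by blast
  have fB: "finite B" using B(1) finite_ex[OF f] finite_subset by blast
  have "card B \<le> Suc (Jf A ?s c x)"
  proof (cases "B = {}")
    case True thus ?thesis by simp
  next
    case False
    obtain a where a: "a \<in> B" and ar: "r \<in> B \<longrightarrow> a = r" using False by blast
    have rB': "r \<notin> B - {a}" using ar by auto
    have e2: "esum s c B = (s a - (c - 1)) + esum s c (B - {a})" using esum_remove[OF fB a] .
    have "c \<le> s a" using a B(1) by (auto simp: ex_def)
    hence "esum s c (B - {a}) \<le> x" using e2 B(2) c by simp
    hence "esum ?s c (B - {a}) \<le> x" using esum_upd_notin[OF rB'] by simp
    moreover have "B - {a} \<subseteq> ex A ?s c" using ex B(1) rB' by auto
    ultimately have "card (B - {a}) \<le> Jf A ?s c x" using Jf_ge[OF f] by blast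
    thus ?thesis using a fB by (simp add: card_Diff_singleton)
  qed
  hence "(c - 1) * Jf A s c (Suc x) \<le> (c - 1) * Suc (Jf A ?s c x)" using B(3) by (metis mult_le_mono2)
  thus ?thesis unfolding Ff_def S mult_Suc_right by linarith
qed



lemma Bellman_lower:
  assumes f: "finite A" and r: "r \<in> A" "0 < s r" and c: "1 \<le> c"
  shows "Vv A s c w \<le> (if w 1 \<and> c \<le> s r then 1 else 0) + Vv A (s(r := s r - 1)) c (\<lambda>i. w (Suc i))"
proof (rule Vv_le, intro allI impI notI)
  let ?s = "s(r := s r - 1)" and ?w = "\<lambda>i. w (Suc i)"
  let ?V = "Vv A ?s c ?w"
  let ?u = "(if w 1 \<and> c \<le> s r then 1 else 0) + ?V"
  fix t assume t: "t \<le> sum s A" and P: "Pp A s c w t ?u"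
  have "t \<noteq> 0" using P Pp_0 by metis
  then obtain t' where t': "t = Suc t'" by (cases t) auto
  have st: "sum s A = Suc (sum ?s A)" using sum_dec[of A r s] f r by simp
  have t'le: "t' \<le> sum ?s A" using t t' st by simp
  let ?h = "hc ?w t'" and ?l = "lc ?w t'"
  have P': "Pp A ?s c ?w t' ?V"
  proof (cases "w 1")
    case False
    have P1: "?V + Ff A s c (Suc (?h + ?V)) < ?l" using P False unfolding Pp_def t' hc_Suc lc_Suc by simp
    show ?thesis
    proof (cases "c \<le> s r")
      case True
      thus ?thesis using P1 F_big[where A=A and r=r and s=s and c=c and x="?h + ?V", OF f r(1) True c] unfolding Pp_def by simp
    next
      case False
      thus ?thesis using P1 F_small[where A=A and r=r and s=s and c=c and x="?h + ?V", OF f r(1) r(2) False[unfolded not_le]] Ff_mono[OF f, of "?h + ?V" "Suc (?h + ?V)" s c]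
        unfolding Pp_def by simp
    qed
  next
    case True
    show ?thesis
    proof (cases "c \<le> s r")
      case cr: True
      have P1: "Suc ?V + Ff A s c (Suc (?h + ?V)) < Suc ?l" using P True cr unfolding Pp_def t' hc_Suc lc_Suc by simp
      thus ?thesis using F_big[where A=A and r=r and s=s and c=c and x="?h + ?V", OF f r(1) cr c] unfolding Pp_def by simp
    next
      case False
      have P1: "?V + Ff A s c (?h + ?V) < Suc ?l" using P True False unfolding Pp_def t' hc_Suc lc_Suc by simp
      thus ?thesis using F_small[where A=A and r=r and s=s and c=c and x="?h + ?V", OF f r(1) r(2) False[unfolded not_le]] False unfolding Pp_def by simp
    qed
  qed
  show False using Vv_gt[OF f t'le P'] by simp
qed

lemma L_step:
  assumes f: "finite A" and r: "r \<in> A" "0 < s r" and c: "1 \<le> c" and w1: "w 1"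
    and mn: "\<forall>i\<in>A. 0 < s i \<longrightarrow> s r \<le> s i"
  shows "(if c \<le> s r then 1 else 0) + Vv A (s(r := s r - 1)) c (\<lambda>i. w (Suc i)) \<le> Vv A s c w"
proof -
  let ?s = "s(r := s r - 1)" and ?w = "\<lambda>i. w (Suc i)"
  let ?V = "Vv A s c w" and ?V' = "Vv A ?s c ?w"
  have st: "sum s A = Suc (sum ?s A)" using sum_dec[of A r s] f r by simp
  show ?thesis
  proof (cases "c \<le> s r")
    case False
    have "?V' \<le> ?V"
    proof (rule Vv_le, intro allI impI notI)
      fix t' assume t': "t' \<le> sum ?s A" and P: "Pp A ?s c ?w t' ?V"
      have "Pp A s c w (Suc t') ?V"
        using P F_small[where A=A and r=r and s=s and c=c and x="hc ?w t' + ?V", OF f r(1) r(2) False[unfolded not_le]] False w1 unfolding Pp_def hc_Suc lc_Suc by simp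
      moreover have "Suc t' \<le> sum s A" using t' st by simp
      ultimately show False using Vv_gt[OF f] by blast
    qed
    thus ?thesis using False by simp
  next
    case True
    have mn': "\<forall>i\<in>A. c \<le> s i \<longrightarrow> s r \<le> s i" using mn c by auto
    have step: "Pp A s c w (Suc t') (Suc v)" if "Pp A ?s c ?w t' v" for t' v
      using that F_min[where A=A and r=r and s=s and c=c and x="hc ?w t' + v", OF f r(1) True c mn'] w1 unfolding Pp_def hc_Suc lc_Suc by simp
    have "Suc ?V' \<le> ?V"
    proof (cases "?V' = 0")
      case True
      have S: "S0 A s c = 0" unfolding S0_def
      proof (rule sum.neutral, intro ballI)
        fix i assume "i \<in> {i \<in> A. s i < c}"
        thus "s i = 0" using mn \<open>c \<le> s r\<close> by force
      qed
      obtain B where B: "B \<subseteq> ex A s c" "esum s c B \<le> 0" "card B = Jf A s c 0"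
        using Jf_obtain[OF f] by blast
      have "B = {}"
      proof (rule ccontr)
        assume "B \<noteq> {}"
        then obtain a where a: "a \<in> B" by blast
        have fB: "finite B" using B(1) finite_ex[OF f] finite_subset by blast
        have "c \<le> s a" using a B(1) by (auto simp: ex_def)
        thus False using esum_remove[OF fB a, of s c] B(2) c by simp
      qed
      hence "Jf A s c 0 = 0" using B(3) by simp
      moreover have "hc w 1 = 0" "lc w 1 = 1" using hc_Suc[of w 0] lc_Suc[of w 0] w1 by (simp_all add: hc_def lc_def)
      ultimately have "Pp A s c w 1 0" using S unfolding Pp_def Ff_def by simp
      moreover have "1 \<le> sum s A" using st by simp
      ultimately have "0 < ?V" using Vv_gt[OF f] by blast
      thus ?thesis using True by simp
    next
      case False
      have "\<not> (\<forall>t' \<le> sum ?s A. \<not> Pp A ?s c ?w t' (?V' - 1))"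
      proof
        assume "\<forall>t' \<le> sum ?s A. \<not> Pp A ?s c ?w t' (?V' - 1)"
        hence "?V' \<le> ?V' - 1" by (rule Vv_le)
        thus False using False by simp
      qed
      then obtain t' where t': "t' \<le> sum ?s A" "Pp A ?s c ?w t' (?V' - 1)" by blast
      have "Pp A s c w (Suc t') ?V'" using step[OF t'(2)] False by simp
      moreover have "Suc t' \<le> sum s A" using t' st by simp
      ultimately have "?V' < ?V" by (intro Vv_gt[OF f])
      thus ?thesis by simp
    qed
    thus ?thesis using True by simp
  qed
qed



definition accw :: "nat \<Rightarrow> (nat \<Rightarrow> nat) \<Rightarrow> (nat \<Rightarrow> bool) \<Rightarrow> nat \<Rightarrow> bool" where
  "accw k m w \<gamma> \<longleftrightarrow>
     m0 m \<gamma> \<noteq> m0 m (\<gamma> - 1) \<and>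
     (\<exists>h\<in>{\<gamma>..k}.
        let ZL = (\<Sum>i=1..h-1. min (m i) (m0 m (\<gamma> - 1)));
            ZH = (\<Sum>i=\<gamma>..h. m i - m0 m (\<gamma> - 1))
        in card {i\<in>{1..ZL+ZH}. w i} \<ge> ZL)"

definition TAw :: "nat \<Rightarrow> (nat \<Rightarrow> nat) \<Rightarrow> (nat \<Rightarrow> bool) \<Rightarrow> nat" where
  "TAw k m w = (GREATEST \<gamma>. \<gamma> \<in> {1..k} \<and> accw k m w \<gamma>)"

lemma TA_eq: "TA k m T = TAw k m (\<lambda>i. T 1 < T i)"
  unfolding TA_def TAw_def TA_accepts_def accw_def by simp

lemma TAw_props:
  assumes k: "1 \<le> k" and pos: "0 < m 1"
  shows "TAw k m w \<in> {1..k}" "accw k m w (TAw k m w)"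
    "\<And>\<gamma>. \<gamma> \<in> {1..k} \<Longrightarrow> accw k m w \<gamma> \<Longrightarrow> \<gamma> \<le> TAw k m w"
proof -
  let ?P = "\<lambda>\<gamma>. \<gamma> \<in> {1..k} \<and> accw k m w \<gamma>"
  have a1: "accw k m w 1" unfolding accw_def m0_def using pos k by (auto simp: Let_def intro!: bexI[of _ 1])
  have P1: "?P 1" using a1 k by simp
  have bd: "\<And>y. ?P y \<Longrightarrow> y \<le> k" by simp
  have "?P (Greatest ?P)" by (rule GreatestI_nat[where P="?P", OF P1 bd])
  thus "TAw k m w \<in> {1..k}" "accw k m w (TAw k m w)" unfolding TAw_def by auto
  show "\<And>\<gamma>. \<gamma> \<in> {1..k} \<Longrightarrow> accw k m w \<gamma> \<Longrightarrow> \<gamma> \<le> TAw k m w"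
    unfolding TAw_def by (rule Greatest_le_nat[where P="?P", OF _ bd]) simp
qed

lemma sum_split_at:
  assumes "a \<le> j" "j \<le> Suc b"
  shows "(\<Sum>i=a..b. f i) = (\<Sum>i=a..<j. f i) + (\<Sum>i=j..b. f i)"
proof -
  have "{a..b} = {a..<j} \<union> {j..b}" using assms by auto
  moreover have "{a..<j} \<inter> {j..b} = {}" by auto
  ultimately show ?thesis by (simp add: sum.union_disjoint)
qed

lemma ZL_eq:
  fixes m :: "nat \<Rightarrow> nat"
  assumes "1 \<le> \<gamma>" "\<gamma> \<le> h" and lo: "\<forall>i. 1 \<le> i \<and> i < \<gamma> \<longrightarrow> m i \<le> mm"
    and hi: "\<forall>i. \<gamma> \<le> i \<and> i < h \<longrightarrow> mm \<le> m i"
  shows "(\<Sum>i=1..h-1. min (m i) mm) = (\<Sum>i\<in>{1..<\<gamma>}. m i) + (h - \<gamma>) * mm"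
proof -
  have e: "{1..h-1} = {1..<h}" using assms by auto
  have "{1..<h} = {1..<\<gamma>} \<union> {\<gamma>..<h}" using assms by auto
  hence "(\<Sum>i\<in>{1..<h}. min (m i) mm) = (\<Sum>i\<in>{1..<\<gamma>}. min (m i) mm) + (\<Sum>i\<in>{\<gamma>..<h}. min (m i) mm)"
    by (simp add: sum.union_disjoint ivl_disj_int)
  moreover have "(\<Sum>i\<in>{1..<\<gamma>}. min (m i) mm) = (\<Sum>i\<in>{1..<\<gamma>}. m i)"
    by (rule sum.cong) (use lo in auto)
  moreover have "(\<Sum>i\<in>{\<gamma>..<h}. min (m i) mm) = (\<Sum>i\<in>{\<gamma>..<h}. mm)"
    by (rule sum.cong) (use hi in auto)
  ultimately show ?thesis unfolding e by simp
qed

lemma sum_ex_split: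
  fixes m :: "nat \<Rightarrow> nat"
  assumes "finite A" and c: "1 \<le> c"
  shows "sum m A = S0 A m c + esum m c (ex A m c) + (c - 1) * card (ex A m c)"
proof -
  have "A = {i\<in>A. m i < c} \<union> ex A m c" unfolding ex_def by auto
  moreover have "{i\<in>A. m i < c} \<inter> ex A m c = {}" unfolding ex_def by auto
  ultimately have "sum m A = S0 A m c + sum m (ex A m c)" unfolding S0_def
    using assms(1) by (metis (no_types, lifting) finite_Un sum.union_disjoint)
  moreover have "sum m (ex A m c) = (\<Sum>i\<in>ex A m c. (m i - (c - 1)) + (c - 1))"
    by (rule sum.cong) (auto simp: ex_def)
  ultimately show ?thesis unfolding esum_def by (simp add: sum.distrib)
qed



lemma K3:
  fixes m :: "nat \<Rightarrow> nat"
  assumes srt: "\<forall>i j. 1 \<le> i \<and> i \<le> j \<and> j \<le> k \<longrightarrow> m i \<le> m j"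
    and b: "1 \<le> b" "b \<le> k" and pos: "0 < m b" and mb: "m b < c"
    and w1: "\<not> w 1"
    and nacc: "\<forall>\<gamma>. 1 \<le> \<gamma> \<and> \<gamma> \<le> k \<and> b < \<gamma> \<longrightarrow> \<not> accw k m w \<gamma>"
    and t': "t' \<le> sum (m(b := m b - 1)) {1..k}"
  shows "\<not> Pp {1..k} (m(b := m b - 1)) c (\<lambda>i. w (Suc i)) t' v"
proof
  let ?A = "{1..k}" and ?s = "m(b := m b - 1)" and ?w = "\<lambda>i. w (Suc i)"
  assume P': "Pp ?A ?s c ?w t' v"
  define x where "x = hc ?w t' + v"
  define J where "J = Jf ?A m c x"
  define E where "E = ex ?A m c"
  have fA: "finite ?A" by simp
  have c1: "1 \<le> c" using pos mb by simp
  have F: "Ff ?A ?s c x + 1 = Ff ?A m c x" by (rule F_small) (use b pos mb in auto)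
  have l: "v + S0 ?A m c + (c - 1) * J \<le> lc ?w t'" using P' F unfolding Pp_def Ff_def J_def x_def by simp
  have st: "sum m ?A = Suc (sum ?s ?A)" using sum_dec[of ?A b m] b pos by simp
  have hl: "hc ?w t' + lc ?w t' = t'" by (rule hc_lc)
  have JE: "J \<le> card E" using Jf_le_card[OF fA] unfolding J_def E_def .
  have fE: "finite E" unfolding E_def using finite_ex[OF fA] .
  show False
  proof (cases "J < card E")
    case False
    hence JE': "J = card E" using JE by simp
    obtain B where B: "B \<subseteq> E" "esum m c B \<le> x" "card B = J"
      using Jf_obtain[OF fA] unfolding J_def E_def by blast
    have "B = E" using card_subset_eq[OF fE B(1)] B(3) JE' by simp
    hence eE: "esum m c E \<le> x" using B(2) by simp
    have "sum m ?A = S0 ?A m c + esum m c E + (c - 1) * card E"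
      unfolding E_def by (rule sum_ex_split[OF fA c1])
    moreover have "v + S0 ?A m c + (c - 1) * card E \<le> lc ?w t'" using l JE' by simp
    ultimately have "sum m ?A \<le> t'" using eE hl unfolding x_def by linarith
    thus False using st t' by simp
  next
    case True
    hence Ene: "E \<noteq> {}" by auto
    define g where "g = (LEAST i. i \<in> E)"
    have gE: "g \<in> E" unfolding g_def using Ene by (metis LeastI ex_in_conv)
    have gle: "\<And>i. i \<in> E \<Longrightarrow> g \<le> i" unfolding g_def by (rule Least_le)
    have g1: "1 \<le> g" "g \<le> k" "c \<le> m g" using gE unfolding E_def ex_def by auto
    have Eeq: "E = {g..k}"
    proof
      show "E \<subseteq> {g..k}" using gle unfolding E_def ex_def by auto
      show "{g..k} \<subseteq> E"
      proof
        fix i assume "i \<in> {g..k}"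
        hence "m g \<le> m i" "1 \<le> i" "i \<le> k" using srt g1 by auto
        thus "i \<in> E" using g1 unfolding E_def ex_def by auto
      qed
    qed
    have below: "\<And>i. 1 \<le> i \<Longrightarrow> i < g \<Longrightarrow> m i < c"
    proof -
      fix i assume "1 \<le> i" "i < g"
      hence "i \<notin> E" using gle by (meson not_le)
      thus "m i < c" using \<open>1 \<le> i\<close> \<open>i < g\<close> g1 unfolding E_def ex_def by auto
    qed
    have bg: "b < g" using below[of b] b mb g1 srt by (metis le_less_linear less_le_trans not_less)
    have g2: "2 \<le> g" using bg b by simp
    define mm where "mm = m (g - 1)"
    have mmc: "mm < c" unfolding mm_def using below[of "g - 1"] g2 by simp
    have m0g: "m0 m g = m g" "m0 m (g - 1) = mm" unfolding m0_def mm_def using g2 by auto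
    have neq: "m0 m g \<noteq> m0 m (g - 1)" using m0g mmc g1 by simp
    define h where "h = g + J"
    have cardE: "card E = Suc k - g" unfolding Eeq by simp
    have hk: "h \<le> k" unfolding h_def using True cardE by simp
    have gh: "g \<le> h" unfolding h_def by simp
    define ZL where "ZL = (\<Sum>i=1..h-1. min (m i) mm)"
    define ZH where "ZH = (\<Sum>i=g..h. m i - mm)"
    have na: "\<not> accw k m w g" using nacc g1 bg by auto
    hence "\<not> (ZL \<le> lc w (ZL + ZH))"
      using neq hk gh unfolding accw_def m0g ZL_def ZH_def lc_def Let_def by auto
    hence lZ: "lc w (ZL + ZH) < ZL" by simp
    have S0eq: "S0 ?A m c = (\<Sum>i\<in>{1..<g}. m i)"
    proof -
      have "{i\<in>?A. m i < c} = {1..<g}"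
      proof
        show "{i\<in>?A. m i < c} \<subseteq> {1..<g}"
        proof
          fix i assume i: "i \<in> {i\<in>?A. m i < c}"
          hence "i \<notin> E" unfolding E_def ex_def by auto
          hence "\<not> (g \<le> i \<and> i \<le> k)" using Eeq by auto
          thus "i \<in> {1..<g}" using i by auto
        qed
        show "{1..<g} \<subseteq> {i\<in>?A. m i < c}" using below g1 by auto
      qed
      thus ?thesis unfolding S0_def by simp
    qed
    have ZLeq: "ZL = S0 ?A m c + J * mm"
    proof -
      have lo: "\<forall>i. 1 \<le> i \<and> i < g \<longrightarrow> m i \<le> mm"
      proof (intro allI impI)
        fix i assume i: "1 \<le> i \<and> i < g"
        hence "i \<le> g - 1" "g - 1 \<le> k" using g1 by auto
        thus "m i \<le> mm" unfolding mm_def using srt i by blast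
      qed
      have hi: "\<forall>i. g \<le> i \<and> i < h \<longrightarrow> mm \<le> m i"
      proof (intro allI impI)
        fix i assume i: "g \<le> i \<and> i < h"
        hence "1 \<le> g - 1" "g - 1 \<le> i" "i \<le> k" using g2 hk by auto
        thus "mm \<le> m i" unfolding mm_def using srt by blast
      qed
      have "ZL = (\<Sum>i\<in>{1..<g}. m i) + (h - g) * mm" unfolding ZL_def
        by (rule ZL_eq[OF g1(1) gh lo hi])
      thus ?thesis using S0eq unfolding h_def by simp
    qed
    have lS: "lc w (Suc t') = lc ?w t'" using lc_Suc[of w t'] w1 by simp
    have hS: "hc w (Suc t') = Suc (hc ?w t')" using hc_Suc[of w t'] w1 by simp
    have "mm \<le> c - 1" using mmc by simp
    hence "J * mm \<le> (c - 1) * J" by (simp add: mult.commute)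
    hence "ZL \<le> lc w (Suc t')" using l lS ZLeq by linarith
    hence "lc w (ZL + ZH) < lc w (Suc t')" using lZ by simp
    hence "\<not> Suc t' \<le> ZL + ZH" using lc_mono[of "Suc t'" "ZL + ZH" w] by linarith
    hence "hc w (ZL + ZH) \<le> hc w (Suc t')" by (intro hc_mono) simp
    moreover have "hc w (ZL + ZH) + lc w (ZL + ZH) = ZL + ZH" by (rule hc_lc)
    ultimately have "ZH \<le> x" using lZ hS unfolding x_def by linarith
    moreover have "esum m c {g..h} \<le> ZH" unfolding esum_def ZH_def
      by (rule sum_mono) (use mmc in auto)
    moreover have "{g..h} \<subseteq> ex ?A m c" using Eeq hk unfolding E_def by auto
    ultimately have "card {g..h} \<le> J" unfolding J_def using Jf_ge[OF fA] by (meson le_trans)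
    thus False unfolding h_def by simp
  qed
qed



lemma sum_smallest:
  fixes f :: "nat \<Rightarrow> nat"
  assumes mono: "\<forall>i j. a \<le> i \<and> i \<le> j \<and> j \<le> k \<longrightarrow> f i \<le> f j"
  shows "C \<subseteq> {a..k} \<Longrightarrow> q \<le> card C \<Longrightarrow> (\<Sum>i\<in>{a..<a+q}. f i) \<le> sum f C"
proof (induction q arbitrary: C)
  case 0 thus ?case by simp
next
  case (Suc q)
  have fC: "finite C" using Suc.prems(1) finite_subset by blast
  have Cne: "C \<noteq> {}" using Suc.prems(2) by auto
  define u where "u = Max C"
  have uC: "u \<in> C" unfolding u_def using fC Cne by simp
  have Cu: "C \<subseteq> {a..u}" using Suc.prems(1) fC unfolding u_def by auto
  have "card C \<le> Suc u - a" using card_mono[OF _ Cu] by simp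
  hence aqu: "a + q \<le> u" using Suc.prems(2) by linarith
  have uk: "u \<le> k" using uC Suc.prems(1) by auto
  have "f (a + q) \<le> f u" using mono aqu uk by auto
  moreover have "(\<Sum>i\<in>{a..<a+q}. f i) \<le> sum f (C - {u})"
    by (rule Suc.IH) (use Suc.prems uC fC in auto)
  moreover have "sum f C = f u + sum f (C - {u})" using fC uC by (simp add: sum.remove)
  ultimately show ?case by simp
qed

lemma sum_minus_const:
  fixes m :: "nat \<Rightarrow> nat"
  assumes "\<forall>i\<in>S. mm \<le> m i"
  shows "(\<Sum>i\<in>S. m i - mm) + card S * mm = sum m S"
proof (cases "finite S")
  case True
  have "sum m S = (\<Sum>i\<in>S. (m i - mm) + mm)" by (rule sum.cong) (use assms in auto)
  thus ?thesis by (simp add: sum.distrib)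
next
  case False thus ?thesis by simp
qed



lemma K2:
  fixes m :: "nat \<Rightarrow> nat"
  assumes srt: "\<forall>i j. 1 \<le> i \<and> i \<le> j \<and> j \<le> k \<longrightarrow> m i \<le> m j"
    and b: "2 \<le> b" "b \<le> k" and c1: "1 \<le> c" and cmm: "c \<le> m (b - 1)" and neqb: "m (b - 1) < m b"
    and acc: "\<exists>h\<in>{b..k}. (\<Sum>i=1..h-1. min (m i) (m (b - 1)))
                 \<le> lc w ((\<Sum>i=1..h-1. min (m i) (m (b - 1))) + (\<Sum>i=b..h. m i - m (b - 1)))"
    and w1: "\<not> w 1"
    and t': "t' \<le> sum (m(b := m b - 1)) {1..k}"
    and P': "Pp {1..k} (m(b := m b - 1)) c (\<lambda>i. w (Suc i)) t' v"
  shows "\<exists>t \<le> sum m {1..k}. Pp {1..k} m c w t v"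
proof -
  let ?A = "{1..k}" and ?s = "m(b := m b - 1)" and ?w = "\<lambda>i. w (Suc i)"
  define mm where "mm = m (b - 1)"
  define d where "d = c - 1"
  define Lo where "Lo = {i\<in>?A. c \<le> m i \<and> i < b}"
  define Rlo where "Rlo = esum m c Lo"
  define x where "x = hc ?w t' + v"
  have fA: "finite ?A" by simp
  have pos: "0 < m b" using neqb by simp
  have st: "sum m ?A = Suc (sum ?s ?A)" using sum_dec[of ?A b m] b pos by simp
  have lS: "lc w (Suc t') = lc ?w t'" using lc_Suc[of w t'] w1 by simp
  have hS: "hc w (Suc t') = Suc (hc ?w t')" using hc_Suc[of w t'] w1 by simp
  have srt_b: "\<And>i. b \<le> i \<Longrightarrow> i \<le> k \<Longrightarrow> m b \<le> m i" using srt b by auto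
  have srt_lo: "\<And>i. 1 \<le> i \<Longrightarrow> i < b \<Longrightarrow> m i \<le> mm"
  proof -
    fix i assume "1 \<le> i" "i < b"
    hence "i \<le> b - 1" "b - 1 \<le> k" using b by auto
    thus "m i \<le> mm" unfolding mm_def using srt \<open>1 \<le> i\<close> by blast
  qed
  show ?thesis
  proof (cases "Rlo \<le> v")
    case True
    have sm: "{i\<in>?A. ?s i < c} = {i\<in>?A. m i < c}" using b neqb cmm by auto
    have S: "S0 ?A ?s c = S0 ?A m c" unfolding S0_def sm
      by (rule sum.cong) (use b neqb cmm in auto)
    have exeq: "ex ?A ?s c = ex ?A m c" unfolding ex_def using b neqb cmm by auto
    obtain B where B: "B \<subseteq> ex ?A m c" "esum m c B \<le> Suc x" "card B = Jf ?A m c (Suc x)"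
      using Jf_obtain[OF fA] by blast
    have fB: "finite B" using B(1) finite_ex[OF fA] finite_subset by blast
    have bex: "b \<in> ex ?A ?s c" unfolding ex_def using b neqb cmm by auto
    have "card B \<le> Jf ?A ?s c x"
    proof (cases "b \<in> B")
      case True
      have "esum m c B = (m b - (c - 1)) + esum m c (B - {b})" using esum_remove[OF fB True] .
      moreover have "esum ?s c B = (?s b - (c - 1)) + esum ?s c (B - {b})" using esum_remove[OF fB True] .
      moreover have "esum ?s c (B - {b}) = esum m c (B - {b})" by (rule esum_upd_notin) simp
      moreover have "?s b - (c - 1) + 1 = m b - (c - 1)" using neqb cmm by simp
      ultimately have "esum ?s c B \<le> x" using B(2) by linarith
      thus ?thesis using Jf_ge[OF fA] B(1) exeq by simp
    next
      case bB: False
      show ?thesis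
      proof (cases "\<exists>a\<in>B. b < a")
        case True
        then obtain a where a: "a \<in> B" "b < a" by blast
        let ?B = "insert b (B - {a})"
        have bB': "b \<notin> B - {a}" using bB by simp
        have fB': "finite (B - {a})" using fB by simp
        have "esum ?s c ?B = (?s b - (c - 1)) + esum ?s c (B - {a})" by (rule esum_insert[OF fB' bB'])
        also have "\<dots> = (m b - 1 - (c - 1)) + esum m c (B - {a})" using esum_upd_notin[OF bB'] by simp
        finally have e1: "esum ?s c ?B = (m b - 1 - (c - 1)) + esum m c (B - {a})" .
        have e2: "esum m c B = (m a - (c - 1)) + esum m c (B - {a})" using esum_remove[OF fB a(1)] .
        have "a \<le> k" using a B(1) by (auto simp: ex_def)
        hence "m b \<le> m a" using srt_b a by simp
        moreover have "c + 1 \<le> m b" using neqb cmm by simp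
        ultimately have "m b - 1 - (c - 1) < m a - (c - 1)" by linarith
        hence "esum ?s c ?B < esum m c B" using e1 e2 by linarith
        hence "esum ?s c ?B \<le> x" using B(2) by simp
        moreover have "?B \<subseteq> ex ?A ?s c" using exeq B(1) bex by auto
        ultimately have "card ?B \<le> Jf ?A ?s c x" using Jf_ge[OF fA] by blast
        moreover have "card ?B = card B"
        proof -
          have c1: "card (B - {a}) = card B - 1" using fB a(1) by (simp add: card_Diff_singleton)
          have c2: "0 < card B" using fB a(1) card_gt_0_iff by blast
          have c3: "card ?B = Suc (card (B - {a}))" using fB bB' by simp
          show ?thesis using c1 c2 c3 by linarith
        qed
        ultimately show ?thesis by linarith
      next
        case False
        have BLo: "B \<subseteq> Lo"
        proof
          fix i assume i: "i \<in> B"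
          hence "i \<noteq> b" "\<not> b < i" using bB False by auto
          hence "i < b" by simp
          thus "i \<in> Lo" using i B(1) unfolding Lo_def ex_def by auto
        qed
        have fLo: "finite Lo" unfolding Lo_def by simp
        have "esum m c B \<le> Rlo" unfolding Rlo_def esum_def by (rule sum_mono2[OF fLo BLo]) simp
        hence "esum ?s c B \<le> x" using esum_upd_notin[OF bB] True unfolding x_def by simp
        thus ?thesis using Jf_ge[OF fA] B(1) exeq by simp
      qed
    qed
    hence "Ff ?A m c (Suc x) \<le> Ff ?A ?s c x" unfolding Ff_def S using B(3) by simp
    hence "Pp ?A m c w (Suc t') v" using P' unfolding Pp_def lS hS x_def by simp
    moreover have "Suc t' \<le> sum m ?A" using st t' by simp
    ultimately show ?thesis by blast
  next
    case False
    hence vR: "v < Rlo" by simp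
    obtain h where h: "b \<le> h" "h \<le> k"
      and hacc: "(\<Sum>i=1..h-1. min (m i) mm) \<le> lc w ((\<Sum>i=1..h-1. min (m i) mm) + (\<Sum>i=b..h. m i - mm))"
      using acc unfolding mm_def by auto
    define ZL where "ZL = (\<Sum>i=1..h-1. min (m i) mm)"
    define ZH where "ZH = (\<Sum>i=b..h. m i - mm)"
    define Z where "Z = ZL + ZH"
    have lZ: "ZL \<le> lc w Z" using hacc unfolding Z_def ZL_def ZH_def .
    have hZ: "hc w Z \<le> ZH" using hc_lc[of w Z] lZ unfolding Z_def by linarith
    let ?E = "ex ?A m c"
    have b1E: "b - 1 \<in> ?E" unfolding ex_def using b cmm by auto
    define i0 where "i0 = (LEAST i. i \<in> ?E)"
    have i0E: "i0 \<in> ?E" unfolding i0_def using b1E by (rule LeastI)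
    have i0le: "\<And>i. i \<in> ?E \<Longrightarrow> i0 \<le> i" unfolding i0_def by (rule Least_le)
    have i01: "1 \<le> i0" "i0 \<le> b - 1" "c \<le> m i0" using i0E i0le[OF b1E] unfolding ex_def by auto
    have Eeq: "?E = {i0..k}"
    proof
      show "?E \<subseteq> {i0..k}" using i0le unfolding ex_def by auto
      show "{i0..k} \<subseteq> ?E"
      proof
        fix i assume "i \<in> {i0..k}"
        hence "m i0 \<le> m i" "1 \<le> i" "i \<le> k" using srt i01 by auto
        thus "i \<in> ?E" using i01 unfolding ex_def by auto
      qed
    qed
    have "Lo = {i\<in>?E. i < b}" unfolding Lo_def ex_def by auto
    also have "\<dots> = {i\<in>{i0..k}. i < b}" unfolding Eeq ..
    also have "\<dots> = {i0..<b}" using b by auto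
    finally have Loeq: "Lo = {i0..<b}" .
    have mono_f: "\<forall>i j. i0 \<le> i \<and> i \<le> j \<and> j \<le> k \<longrightarrow> m i - d \<le> m j - d"
    proof (intro allI impI)
      fix i j assume "i0 \<le> i \<and> i \<le> j \<and> j \<le> k"
      hence "m i \<le> m j" using srt i01 by auto
      thus "m i - d \<le> m j - d" by (rule diff_le_mono)
    qed
    have Rlo_eq: "Rlo = (\<Sum>i\<in>{i0..<b}. m i - d)" unfolding Rlo_def esum_def Loeq d_def ..
    have hi_ge: "(\<Sum>i=b..h. m i - d) \<ge> ZH + 1"
    proof -
      have "(\<Sum>i=b..h. m i - d) \<ge> (\<Sum>i=b..h. (m i - mm) + 1)"
      proof (rule sum_mono)
        fix i assume "i \<in> {b..h}"
        hence "mm \<le> m i" using srt_b[of i] neqb h unfolding mm_def by auto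
        thus "m i - mm + 1 \<le> m i - d" using cmm c1 unfolding mm_def d_def by linarith
      qed
      moreover have "(\<Sum>i=b..h. (m i - mm) + 1) = ZH + (Suc h - b)" unfolding ZH_def sum.distrib by simp
      ultimately show ?thesis using h by linarith
    qed
    have big: "esum m c B \<ge> Rlo + ZH + 1" if "B \<subseteq> ?E" "Suc h - i0 \<le> card B" for B
    proof -
      have "(\<Sum>i\<in>{i0..<i0 + (Suc h - i0)}. m i - d) \<le> sum (\<lambda>i. m i - d) B"
        by (rule sum_smallest[OF mono_f]) (use that Eeq in auto)
      moreover have "{i0..<i0 + (Suc h - i0)} = {i0..h}" using i01 h by auto
      moreover have "(\<Sum>i=i0..h. m i - d) = (\<Sum>i\<in>{i0..<b}. m i - d) + (\<Sum>i=b..h. m i - d)"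
        by (rule sum_split_at) (use i01 h in auto)
      ultimately show ?thesis using hi_ge Rlo_eq unfolding esum_def d_def by simp
    qed
    define J where "J = Jf ?A m c (hc w Z + v)"
    have Jb: "J \<le> h - i0"
    proof -
      obtain B where B: "B \<subseteq> ?E" "esum m c B \<le> hc w Z + v" "card B = J"
        using Jf_obtain[OF fA] unfolding J_def by blast
      have "\<not> Suc h - i0 \<le> card B"
      proof
        assume "Suc h - i0 \<le> card B"
        hence "esum m c B \<ge> Rlo + ZH + 1" using big B(1) by blast
        thus False using B(2) hZ vR by linarith
      qed
      thus ?thesis using B(3) by simp
    qed
    have lo: "\<forall>i. 1 \<le> i \<and> i < b \<longrightarrow> m i \<le> mm" using srt_lo by auto
    have hi: "\<forall>i. b \<le> i \<and> i < h \<longrightarrow> mm \<le> m i"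
    proof (intro allI impI)
      fix i assume "b \<le> i \<and> i < h"
      hence "m b \<le> m i" using srt_b h by simp
      thus "mm \<le> m i" using neqb unfolding mm_def by simp
    qed
    have ZLeq: "ZL = (\<Sum>i\<in>{1..<b}. m i) + (h - b) * mm" unfolding ZL_def
      by (rule ZL_eq[OF _ h(1) lo hi]) (use b in simp)
    have small_split: "(\<Sum>i\<in>{1..<b}. m i) = S0 ?A m c + sum m Lo"
    proof -
      have "{1..<b} = {i\<in>?A. m i < c} \<union> Lo"
      proof
        show "{1..<b} \<subseteq> {i\<in>?A. m i < c} \<union> Lo" unfolding Lo_def using b by auto
        show "{i\<in>?A. m i < c} \<union> Lo \<subseteq> {1..<b}"
        proof
          fix i assume i: "i \<in> {i\<in>?A. m i < c} \<union> Lo"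
          show "i \<in> {1..<b}"
          proof (cases "i \<in> Lo")
            case True thus ?thesis unfolding Lo_def by auto
          next
            case False
            hence "i \<in> ?A" "m i < c" using i by auto
            moreover have "\<not> b \<le> i" using srt_b[of i] neqb cmm calculation unfolding mm_def by auto
            ultimately show ?thesis by auto
          qed
        qed
      qed
      moreover have "{i\<in>?A. m i < c} \<inter> Lo = {}" unfolding Lo_def by auto
      ultimately show ?thesis unfolding S0_def by (simp add: sum.union_disjoint Lo_def)
    qed
    have Lo_sum: "sum m Lo = Rlo + d * card Lo"
    proof -
      have "(\<Sum>i\<in>Lo. m i - d) + card Lo * d = sum m Lo"
        by (rule sum_minus_const) (auto simp: Lo_def d_def)
      thus ?thesis unfolding Rlo_def esum_def d_def by (simp add: mult.commute)
    qed
    have cLo: "card Lo = b - i0" unfolding Loeq by simp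
    have dmm: "d < mm" using cmm c1 unfolding d_def mm_def by simp
    have "v + S0 ?A m c + d * J \<le> v + S0 ?A m c + d * (b - i0) + d * (h - b)"
    proof -
      have "J \<le> (b - i0) + (h - b)" using Jb i01 h by linarith
      hence "d * J \<le> d * ((b - i0) + (h - b))" by simp
      thus ?thesis by (simp add: distrib_left)
    qed
    also have "\<dots> < S0 ?A m c + Rlo + d * (b - i0) + (h - b) * mm"
    proof -
      have "d * (h - b) \<le> (h - b) * mm" using dmm by (simp add: mult.commute)
      thus ?thesis using vR by linarith
    qed
    also have "\<dots> = ZL" using ZLeq small_split Lo_sum cLo by simp
    finally have "Pp ?A m c w Z v" using lZ unfolding Pp_def Ff_def J_def d_def by simp
    moreover have "Z \<le> sum m ?A"
    proof -
      have "\<forall>i\<in>{b..h}. mm \<le> m i" using hi srt_b h neqb unfolding mm_def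
        by (metis atLeastAtMost_iff le_trans less_imp_le)
      hence "ZH + (Suc h - b) * mm = (\<Sum>i=b..h. m i)" unfolding ZH_def
        using sum_minus_const[of "{b..h}" mm m] by simp
      moreover have "(Suc h - b) * mm = (h - b) * mm + mm" using h by (simp add: Suc_diff_le)
      ultimately have "Z + mm = (\<Sum>i\<in>{1..<b}. m i) + (\<Sum>i=b..h. m i)" unfolding Z_def ZLeq
        by linarith
      also have "\<dots> = (\<Sum>i=1..h. m i)" using sum_split_at[of 1 b h m] b h by simp
      also have "\<dots> \<le> sum m ?A" by (rule sum_mono2) (use h in auto)
      finally show ?thesis by simp
    qed
    ultimately show ?thesis by blast
  qed
qed



lemma K:
  fixes m :: "nat \<Rightarrow> nat"
  assumes k: "1 \<le> k" and pos: "0 < m 1"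
    and srt: "\<forall>i j. 1 \<le> i \<and> i \<le> j \<and> j \<le> k \<longrightarrow> m i \<le> m j"
    and w1: "\<not> w 1" and c1: "1 \<le> c"
  shows "Vv {1..k} (m(TAw k m w := m (TAw k m w) - 1)) c (\<lambda>i. w (Suc i)) \<le> Vv {1..k} m c w"
proof -
  define b where "b = TAw k m w"
  let ?A = "{1..k}" and ?s = "m(b := m b - 1)" and ?w = "\<lambda>i. w (Suc i)"
  have bA: "b \<in> ?A" and accb: "accw k m w b" and grt: "\<And>\<gamma>. \<gamma> \<in> ?A \<Longrightarrow> accw k m w \<gamma> \<Longrightarrow> \<gamma> \<le> b"
    using TAw_props[where k=k and m=m and w=w, OF k pos] unfolding b_def by auto
  have fA: "finite ?A" by simp
  have posb: "0 < m b" using pos srt bA by (metis atLeastAtMost_iff le_refl less_le_trans)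
  have st: "sum m ?A = Suc (sum ?s ?A)" using sum_dec[of ?A b m] bA posb by simp
  have lS: "\<And>t. lc w (Suc t) = lc ?w t" using lc_Suc w1 by simp
  have hS: "\<And>t. hc w (Suc t) = Suc (hc ?w t)" using hc_Suc w1 by simp
  define V where "V = Vv ?A m c w"
  have "Vv ?A ?s c ?w \<le> V"
  proof (rule Vv_le, intro allI impI notI)
    fix t' assume t': "t' \<le> sum ?s ?A" and P': "Pp ?A ?s c ?w t' V"
    show False
    proof (cases "m b < c")
      case True
      have nacc: "\<forall>\<gamma>. 1 \<le> \<gamma> \<and> \<gamma> \<le> k \<and> b < \<gamma> \<longrightarrow> \<not> accw k m w \<gamma>"
      proof (intro allI impI notI)
        fix \<gamma> assume "1 \<le> \<gamma> \<and> \<gamma> \<le> k \<and> b < \<gamma>" "accw k m w \<gamma>"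
        thus False using grt[of \<gamma>] by auto
      qed
      show False using K3[OF srt _ _ posb True w1 nacc t'] bA P' by auto
    next
      case False
      hence cb: "c \<le> m b" by simp
      show False
      proof (cases "c \<le> m0 m (b - 1)")
        case True
        have b2: "2 \<le> b" using True c1 bA unfolding m0_def by (cases "b - 1 = 0") auto
        have m0s: "m0 m (b - 1) = m (b - 1)" "m0 m b = m b" unfolding m0_def using b2 by auto
        have "m (b - 1) \<le> m b" using srt b2 bA by auto
        moreover have "m (b - 1) \<noteq> m b" using accb m0s unfolding accw_def by auto
        ultimately have neqb: "m (b - 1) < m b" by simp
        have acc: "\<exists>h\<in>{b..k}. (\<Sum>i=1..h-1. min (m i) (m (b - 1)))
                 \<le> lc w ((\<Sum>i=1..h-1. min (m i) (m (b - 1))) + (\<Sum>i=b..h. m i - m (b - 1)))"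
          using accb unfolding accw_def m0s lc_def Let_def by auto
        have "\<exists>t \<le> sum m ?A. Pp ?A m c w t V"
          by (rule K2[OF srt b2 _ c1 _ neqb acc w1 t' P']) (use bA True m0s in auto)
        thus False using Vv_gt[OF fA] unfolding V_def by blast
      next
        case False
        have mn: "\<forall>i\<in>?A. c \<le> m i \<longrightarrow> m b \<le> m i"
        proof (intro ballI impI)
          fix i assume i: "i \<in> ?A" "c \<le> m i"
          show "m b \<le> m i"
          proof (cases "b \<le> i")
            case True thus ?thesis using srt i bA by auto
          next
            case nb: False
            hence "i \<le> b - 1" "1 \<le> i" "b - 1 \<le> k" "b - 1 \<noteq> 0" using i bA by auto
            hence "m i \<le> m0 m (b - 1)" using srt unfolding m0_def by auto
            thus ?thesis using False i by simp
          qed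
        qed
        have "Ff ?A m c (Suc (hc ?w t' + V)) \<le> Ff ?A ?s c (hc ?w t' + V)"
          by (rule F_min[where A="?A" and r=b and s=m and c=c, OF fA bA cb c1 mn])
        hence "Pp ?A m c w (Suc t') V" using P' unfolding Pp_def lS hS by simp
        moreover have "Suc t' \<le> sum m ?A" using st t' by simp
        ultimately show False using Vv_gt[OF fA] unfolding V_def by blast
      qed
    qed
  qed
  thus ?thesis unfolding V_def b_def .
qed



lemma transport:
  fixes s t :: "nat \<Rightarrow> nat"
  assumes fA: "finite A" and bij: "bij_betw \<sigma> A' B" and BA: "B \<subseteq> A" and z: "\<forall>i\<in>A - B. s i = 0"
    and tj: "\<forall>j\<in>A'. t j = s (\<sigma> j)" and c1: "1 \<le> c"
  shows "Vv A s c w = Vv A' t c w"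
proof -
  have inj: "inj_on \<sigma> A'" and img: "\<sigma> ` A' = B" using bij unfolding bij_betw_def by auto
  have fB: "finite B" using fA BA finite_subset by blast
  have fA': "finite A'" using bij fB bij_betw_finite by blast
  have reidx: "\<And>C. C \<subseteq> A' \<Longrightarrow> (\<Sum>i\<in>\<sigma> ` C. f i) = (\<Sum>j\<in>C. f (\<sigma> j))" for f :: "nat \<Rightarrow> nat"
    by (rule sum.reindex_cong[OF inj_on_subset[OF inj]]) auto
  have sumeq: "sum s A = sum t A'"
  proof -
    have "sum s A = sum s B" by (rule sum.mono_neutral_right[OF fA BA]) (use z in auto)
    also have "\<dots> = (\<Sum>j\<in>A'. s (\<sigma> j))" using reidx[of A'] img by simp
    also have "\<dots> = sum t A'" by (rule sum.cong) (use tj in auto)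
    finally show ?thesis .
  qed
  have S0eq: "S0 A s c = S0 A' t c"
  proof -
    have z': "\<forall>i\<in>{i\<in>A. s i < c} - {i\<in>B. s i < c}. s i = 0"
    proof
      fix i assume "i \<in> {i\<in>A. s i < c} - {i\<in>B. s i < c}"
      hence "i \<in> A - B" by auto
      thus "s i = 0" using z by blast
    qed
    have "S0 A s c = sum s {i\<in>B. s i < c}" unfolding S0_def
      by (rule sum.mono_neutral_right[OF _ _ z']) (use fA BA in auto)
    also have "{i\<in>B. s i < c} = \<sigma> ` {j\<in>A'. t j < c}" using img tj by auto
    also have "sum s (\<sigma> ` {j\<in>A'. t j < c}) = (\<Sum>j\<in>{j\<in>A'. t j < c}. s (\<sigma> j))" by (rule reidx) auto
    also have "\<dots> = S0 A' t c" unfolding S0_def by (rule sum.cong) (use tj in auto)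
    finally show ?thesis .
  qed
  have exeq: "ex A s c = \<sigma> ` ex A' t c"
  proof
    show "ex A s c \<subseteq> \<sigma> ` ex A' t c"
    proof
      fix i assume i: "i \<in> ex A s c"
      hence "i \<in> B" using z c1 unfolding ex_def by force
      then obtain j where j: "j \<in> A'" "i = \<sigma> j" using img by auto
      thus "i \<in> \<sigma> ` ex A' t c" using i tj unfolding ex_def by auto
    qed
    show "\<sigma> ` ex A' t c \<subseteq> ex A s c" using img BA tj unfolding ex_def by auto
  qed
  have esumeq: "\<And>C. C \<subseteq> A' \<Longrightarrow> esum s c (\<sigma> ` C) = esum t c C"
    unfolding esum_def using reidx tj by (simp add: subset_iff)
  have exA': "ex A' t c \<subseteq> A'" unfolding ex_def by auto
  have cardeq: "card ` Jset A s c x = card ` Jset A' t c x" for x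
  proof
    show "card ` Jset A s c x \<subseteq> card ` Jset A' t c x"
    proof
      fix n assume "n \<in> card ` Jset A s c x"
      then obtain Bs where Bs: "Bs \<subseteq> ex A s c" "esum s c Bs \<le> x" "n = card Bs" unfolding Jset_def by auto
      define C where "C = {j\<in>ex A' t c. \<sigma> j \<in> Bs}"
      have CA: "C \<subseteq> A'" unfolding C_def using exA' by auto
      have BsC: "Bs = \<sigma> ` C" using Bs(1) exeq unfolding C_def by auto
      have "card C = card Bs" unfolding BsC by (rule card_image[symmetric, OF inj_on_subset[OF inj CA]])
      moreover have "esum t c C \<le> x" using esumeq[OF CA] Bs(2) BsC by simp
      moreover have "C \<subseteq> ex A' t c" unfolding C_def by auto
      ultimately show "n \<in> card ` Jset A' t c x" unfolding Jset_def using Bs(3) by (auto intro!: image_eqI[where x=C])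
    qed
    show "card ` Jset A' t c x \<subseteq> card ` Jset A s c x"
    proof
      fix n assume "n \<in> card ` Jset A' t c x"
      then obtain C where C: "C \<subseteq> ex A' t c" "esum t c C \<le> x" "n = card C" unfolding Jset_def by auto
      have CA: "C \<subseteq> A'" using C(1) exA' by auto
      have "card (\<sigma> ` C) = card C" by (rule card_image[OF inj_on_subset[OF inj CA]])
      moreover have "esum s c (\<sigma> ` C) \<le> x" using esumeq[OF CA] C(2) by simp
      moreover have "\<sigma> ` C \<subseteq> ex A s c" using C(1) exeq by auto
      ultimately show "n \<in> card ` Jset A s c x" unfolding Jset_def using C(3) by (auto intro!: image_eqI[where x="\<sigma> ` C"])
    qed
  qed
  have Ffeq: "Ff A s c x = Ff A' t c x" for x unfolding Ff_def Jf_def S0eq cardeq ..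
  have Ppeq: "Pp A s c w t' v = Pp A' t c w t' v" for t' v unfolding Pp_def Ffeq ..
  show ?thesis unfolding Vv_def sumeq Ppeq ..
qed

lemma sort_bij:
  fixes P :: "nat set" and s :: "nat \<Rightarrow> nat"
  assumes "finite P"
  shows "\<exists>\<sigma>. bij_betw \<sigma> {1..card P} P \<and> (\<forall>i j. 1 \<le> i \<and> i \<le> j \<and> j \<le> card P \<longrightarrow> s (\<sigma> i) \<le> s (\<sigma> j))"
proof -
  define xs where "xs = sort_key s (sorted_list_of_set P)"
  have d: "distinct xs" unfolding xs_def by (simp add: assms)
  have st: "set xs = P" unfolding xs_def by (simp add: assms)
  have len: "length xs = card P" using distinct_card[OF d] st by simp
  have so: "sorted (map s xs)" unfolding xs_def by simp
  define \<sigma> where "\<sigma> i = xs ! (i - 1)" for i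
  have "bij_betw (\<lambda>i. xs ! i) {..<length xs} (set xs)" by (rule bij_betw_nth[OF d]) auto
  moreover have "bij_betw (\<lambda>i. i - 1) {1..card P} {..<length xs}"
    unfolding len by (rule bij_betw_byWitness[where f'="\<lambda>i. i + 1"]) auto
  ultimately have "bij_betw ((\<lambda>i. xs ! i) \<circ> (\<lambda>i. i - 1)) {1..card P} (set xs)"
    by (intro bij_betw_trans) auto
  hence b: "bij_betw \<sigma> {1..card P} P" unfolding \<sigma>_def st comp_def .
  have "\<forall>i j. 1 \<le> i \<and> i \<le> j \<and> j \<le> card P \<longrightarrow> s (\<sigma> i) \<le> s (\<sigma> j)"
  proof (intro allI impI)
    fix i j assume ij: "1 \<le> i \<and> i \<le> j \<and> j \<le> card P"
    have "map s xs ! (i - 1) \<le> map s xs ! (j - 1)"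
      by (rule sorted_nth_mono[OF so]) (use ij len in auto)
    moreover have "i - 1 < length xs" "j - 1 < length xs" using ij len by auto
    ultimately show "s (\<sigma> i) \<le> s (\<sigma> j)" unfolding \<sigma>_def by simp
  qed
  with b show ?thesis by blast
qed



lemma Kgen:
  fixes s :: "nat \<Rightarrow> nat"
  assumes ne: "\<exists>i\<in>{1..k}. 0 < s i" and w1: "\<not> w 1"
  shows "\<exists>r\<in>{1..k}. 0 < s r \<and>
           (\<forall>c. 1 \<le> c \<longrightarrow> Vv {1..k} (s(r := s r - 1)) c (\<lambda>i. w (Suc i)) \<le> Vv {1..k} s c w)"
proof -
  define P where "P = {i\<in>{1..k}. 0 < s i}"
  have fP: "finite P" unfolding P_def by simp
  have Pne: "P \<noteq> {}" using ne unfolding P_def by auto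
  define k' where "k' = card P"
  have k1: "1 \<le> k'" unfolding k'_def using fP Pne by (simp add: Suc_le_eq card_gt_0_iff)
  obtain \<sigma> where bij: "bij_betw \<sigma> {1..k'} P"
    and so: "\<forall>i j. 1 \<le> i \<and> i \<le> j \<and> j \<le> k' \<longrightarrow> s (\<sigma> i) \<le> s (\<sigma> j)"
    using sort_bij[OF fP, of s] unfolding k'_def by blast
  define m' where "m' i = s (\<sigma> i)" for i
  have inj: "inj_on \<sigma> {1..k'}" and img: "\<sigma> ` {1..k'} = P" using bij unfolding bij_betw_def by auto
  have pos: "0 < m' 1" unfolding m'_def using img k1 unfolding P_def by auto
  have srt: "\<forall>i j. 1 \<le> i \<and> i \<le> j \<and> j \<le> k' \<longrightarrow> m' i \<le> m' j" unfolding m'_def using so by blast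
  define b where "b = TAw k' m' w"
  have bA: "b \<in> {1..k'}" unfolding b_def using TAw_props[where k=k' and m=m' and w=w, OF k1 pos] by simp
  define r where "r = \<sigma> b"
  have rP: "r \<in> P" unfolding r_def using img bA by auto
  have PA: "P \<subseteq> {1..k}" unfolding P_def by auto
  have z: "\<forall>i\<in>{1..k} - P. s i = 0" unfolding P_def by auto
  have z2: "\<forall>i\<in>{1..k} - P. (s(r := s r - 1)) i = 0" using z rP by auto
  have tj2: "\<forall>j\<in>{1..k'}. (m'(b := m' b - 1)) j = (s(r := s r - 1)) (\<sigma> j)"
  proof
    fix j assume j: "j \<in> {1..k'}"
    show "(m'(b := m' b - 1)) j = (s(r := s r - 1)) (\<sigma> j)"
    proof (cases "j = b")
      case True thus ?thesis unfolding m'_def r_def by simp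
    next
      case False
      hence "\<sigma> j \<noteq> r" unfolding r_def using inj j bA by (auto dest: inj_onD)
      thus ?thesis using False unfolding m'_def by simp
    qed
  qed
  have "\<forall>c. 1 \<le> c \<longrightarrow> Vv {1..k} (s(r := s r - 1)) c (\<lambda>i. w (Suc i)) \<le> Vv {1..k} s c w"
  proof (intro allI impI)
    fix c :: nat assume c1: "1 \<le> c"
    have e1: "Vv {1..k} s c w = Vv {1..k'} m' c w"
      by (rule transport[OF _ bij PA z _ c1]) (auto simp: m'_def)
    have e2: "Vv {1..k} (s(r := s r - 1)) c (\<lambda>i. w (Suc i)) = Vv {1..k'} (m'(b := m' b - 1)) c (\<lambda>i. w (Suc i))"
      by (rule transport[OF _ bij PA z2 tj2 c1]) simp
    show "Vv {1..k} (s(r := s r - 1)) c (\<lambda>i. w (Suc i)) \<le> Vv {1..k} s c w"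
      unfolding e1 e2 b_def using K[where k=k' and m=m' and w=w and c=c, OF k1 pos srt w1 c1] .
  qed
  moreover have "r \<in> {1..k}" "0 < s r" using rP unfolding P_def by auto
  ultimately show ?thesis by blast
qed



definition Nc :: "(nat \<Rightarrow> nat) \<Rightarrow> (nat \<Rightarrow> nat) \<Rightarrow> (nat \<Rightarrow> bool) \<Rightarrow> nat \<Rightarrow> nat \<Rightarrow> nat" where
  "Nc s y w c N = card {t\<in>{1..N}. w t \<and> c \<le> rem_cap s y t}"

lemma rem_cap_1: "rem_cap s y 1 = s (y 1)"
  unfolding rem_cap_def by simp

lemma rem_cap_shift:
  assumes "1 \<le> t"
  shows "rem_cap s y (Suc t) = rem_cap (s(y 1 := s (y 1) - 1)) (\<lambda>u. y (Suc u)) t"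
proof -
  obtain t0 where t0: "t = Suc t0" using assms by (cases t) auto
  let ?a = "y (Suc t)"
  have "card {u\<in>{1..<Suc t}. y u = ?a} = card {u\<in>{1..Suc t0}. y u = ?a}" unfolding t0
    by (rule arg_cong[where f=card]) auto
  also have "\<dots> = (if y 1 = ?a then 1 else 0) + card {u\<in>{1..t0}. y (Suc u) = ?a}" by (rule card_shift)
  also have "{u\<in>{1..t0}. y (Suc u) = ?a} = {u\<in>{1..<t}. y (Suc u) = ?a}" unfolding t0 by auto
  finally have e: "card {u\<in>{1..<Suc t}. y u = ?a} = (if y 1 = ?a then 1 else 0) + card {u\<in>{1..<t}. y (Suc u) = ?a}" .
  show ?thesis unfolding rem_cap_def e by (cases "y 1 = ?a") auto
qed

lemma rem_cap_cong: "1 \<le> t \<Longrightarrow> (\<And>u. 1 \<le> u \<Longrightarrow> u \<le> t \<Longrightarrow> y u = z u) \<Longrightarrow> rem_cap s y t = rem_cap s z t"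
proof -
  assume t: "1 \<le> t" and h: "\<And>u. 1 \<le> u \<Longrightarrow> u \<le> t \<Longrightarrow> y u = z u"
  have "{u\<in>{1..<t}. y u = y t} = {u\<in>{1..<t}. z u = z t}" using h t by auto
  thus ?thesis unfolding rem_cap_def using h t by auto
qed

lemma Nc_cong: "(\<And>u. 1 \<le> u \<Longrightarrow> u \<le> N \<Longrightarrow> y u = z u) \<Longrightarrow> Nc s y w c N = Nc s z w c N"
proof -
  assume h: "\<And>u. 1 \<le> u \<Longrightarrow> u \<le> N \<Longrightarrow> y u = z u"
  have "{t\<in>{1..N}. w t \<and> c \<le> rem_cap s y t} = {t\<in>{1..N}. w t \<and> c \<le> rem_cap s z t}"
  proof (rule Collect_cong)
    fix t show "(t \<in> {1..N} \<and> w t \<and> c \<le> rem_cap s y t) = (t \<in> {1..N} \<and> w t \<and> c \<le> rem_cap s z t)"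
      using rem_cap_cong[of t y z s] h by (cases "1 \<le> t") auto
  qed
  thus ?thesis unfolding Nc_def by simp
qed

lemma Nc_shift:
  "Nc s y w c (Suc N) = (if w 1 \<and> c \<le> s (y 1) then 1 else 0)
     + Nc (s(y 1 := s (y 1) - 1)) (\<lambda>u. y (Suc u)) (\<lambda>u. w (Suc u)) c N"
proof -
  have "Nc s y w c (Suc N) = (if w 1 \<and> c \<le> rem_cap s y 1 then 1 else 0)
     + card {t\<in>{1..N}. w (Suc t) \<and> c \<le> rem_cap s y (Suc t)}"
    unfolding Nc_def by (rule card_shift)
  also have "{t\<in>{1..N}. w (Suc t) \<and> c \<le> rem_cap s y (Suc t)} =
      {t\<in>{1..N}. w (Suc t) \<and> c \<le> rem_cap (s(y 1 := s (y 1) - 1)) (\<lambda>u. y (Suc u)) t}"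
    using rem_cap_shift by auto
  finally show ?thesis unfolding Nc_def rem_cap_1 .
qed

lemma valid_shift:
  assumes v: "valid_seq k s (Suc N) y"
  shows "valid_seq k (s(y 1 := s (y 1) - 1)) N (\<lambda>u. y (Suc u))" "y 1 \<in> {1..k}" "0 < s (y 1)"
proof -
  have r: "\<forall>t\<in>{1..Suc N}. y t \<in> {1..k}" and cr: "\<forall>r\<in>{1..k}. card {t\<in>{1..Suc N}. y t = r} = s r"
    using v unfolding valid_seq_def by auto
  show y1: "y 1 \<in> {1..k}" using r by auto
  have cs: "\<And>r. card {t\<in>{1..Suc N}. y t = r} = (if y 1 = r then 1 else 0) + card {t\<in>{1..N}. y (Suc t) = r}"
    by (rule card_shift)
  show "0 < s (y 1)" using cr y1 cs[of "y 1"] by simp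
  show "valid_seq k (s(y 1 := s (y 1) - 1)) N (\<lambda>u. y (Suc u))"
    unfolding valid_seq_def
  proof (intro conjI ballI)
    fix t assume "t \<in> {1..N}" thus "y (Suc t) \<in> {1..k}" using r by auto
  next
    fix r assume rk: "r \<in> {1..k}"
    show "card {t\<in>{1..N}. y (Suc t) = r} = (s(y 1 := s (y 1) - 1)) r"
      using cr rk cs[of r] by (cases "y 1 = r") auto
  qed
qed

lemma valid_cons:
  assumes v: "valid_seq k (s(r := s r - 1)) N y'" and r: "r \<in> {1..k}" "0 < s r"
  shows "valid_seq k s (Suc N) (\<lambda>t. if t = 1 then r else y' (t - 1))"
proof -
  let ?y = "\<lambda>t. if t = 1 then r else y' (t - 1)"
  have r': "\<forall>t\<in>{1..N}. y' t \<in> {1..k}" and cr: "\<forall>a\<in>{1..k}. card {t\<in>{1..N}. y' t = a} = (s(r := s r - 1)) a"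
    using v unfolding valid_seq_def by auto
  have cs: "\<And>a. card {t\<in>{1..Suc N}. ?y t = a} = (if r = a then 1 else 0) + card {t\<in>{1..N}. y' t = a}"
  proof -
    fix a
    have "card {t\<in>{1..Suc N}. ?y t = a} = (if ?y 1 = a then 1 else 0) + card {t\<in>{1..N}. ?y (Suc t) = a}"
      by (rule card_shift)
    moreover have "{t\<in>{1..N}. ?y (Suc t) = a} = {t\<in>{1..N}. y' t = a}" by auto
    ultimately show "card {t\<in>{1..Suc N}. ?y t = a} = (if r = a then 1 else 0) + card {t\<in>{1..N}. y' t = a}" by simp
  qed
  show ?thesis unfolding valid_seq_def
  proof (intro conjI ballI)
    fix t assume "t \<in> {1..Suc N}"
    show "?y t \<in> {1..k}"
    proof (cases "t = 1")
      case True thus ?thesis using r by simp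
    next
      case False
      hence "t - 1 \<in> {1..N}" using \<open>t \<in> {1..Suc N}\<close> by auto
      thus ?thesis using r' False by simp
    qed
  next
    fix a assume a: "a \<in> {1..k}"
    show "card {t\<in>{1..Suc N}. ?y t = a} = s a" using cs[of a] cr a r by (cases "r = a") auto
  qed
qed



lemma lower_bound:
  "valid_seq k s N y \<Longrightarrow> 1 \<le> c \<Longrightarrow> Vv {1..k} s c w \<le> Nc s y w c N"
proof (induction N arbitrary: s y w)
  case 0
  have "\<forall>r\<in>{1..k}. s r = 0" using 0(1) unfolding valid_seq_def by auto
  hence "sum s {1..k} = 0" by simp
  hence "Vv {1..k} s c w \<le> 0" using Pp_0 by (intro Vv_le) auto
  thus ?case by simp
next
  case (Suc N)
  let ?r = "y 1"
  let ?s = "s(?r := s ?r - 1)" and ?y = "\<lambda>u. y (Suc u)" and ?w = "\<lambda>u. w (Suc u)"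
  have v: "valid_seq k ?s N ?y" "?r \<in> {1..k}" "0 < s ?r" using valid_shift[OF Suc.prems(1)] by auto
  have "Vv {1..k} s c w \<le> (if w 1 \<and> c \<le> s ?r then 1 else 0) + Vv {1..k} ?s c ?w"
    by (rule Bellman_lower[where A="{1..k}" and r="?r" and s=s and c=c, OF _ v(2) v(3) Suc.prems(2)]) simp
  also have "\<dots> \<le> (if w 1 \<and> c \<le> s ?r then 1 else 0) + Nc ?s ?y ?w c N"
  proof -
    have "Vv {1..k} ?s c ?w \<le> Nc ?s ?y ?w c N" by (rule Suc.IH[OF v(1) Suc.prems(2)])
    thus ?thesis by simp
  qed
  also have "\<dots> = Nc s y w c (Suc N)" using Nc_shift[of s y w c N] by simp
  finally show ?case .
qed

lemma universal:
  "N = sum s {1..k} \<Longrightarrow> \<exists>y. valid_seq k s N y \<and> (\<forall>c. 1 \<le> c \<longrightarrow> Nc s y w c N \<le> Vv {1..k} s c w)"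
proof (induction N arbitrary: s w)
  case 0
  hence z: "\<forall>r\<in>{1..k}. s r = 0" by simp
  have "valid_seq k s 0 (\<lambda>_. 1)" unfolding valid_seq_def using z by auto
  moreover have "\<forall>c. Nc s (\<lambda>_. 1) w c 0 = 0" unfolding Nc_def by simp
  ultimately show ?case by auto
next
  case (Suc N)
  let ?w = "\<lambda>u. w (Suc u)"
  have ne: "\<exists>i\<in>{1..k}. 0 < s i"
  proof (rule ccontr)
    assume "\<not> (\<exists>i\<in>{1..k}. 0 < s i)"
    hence "sum s {1..k} = 0" by simp
    thus False using Suc.prems by simp
  qed
  have "\<exists>r\<in>{1..k}. 0 < s r \<and> (\<forall>c. 1 \<le> c \<longrightarrow>
          (if w 1 \<and> c \<le> s r then 1 else 0) + Vv {1..k} (s(r := s r - 1)) c ?w \<le> Vv {1..k} s c w)"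
  proof (cases "w 1")
    case True
    obtain i where i: "i \<in> {1..k}" "0 < s i" using ne by blast
    obtain r where r: "r \<in> {1..k} \<and> 0 < s r" and mn: "\<forall>j. j \<in> {1..k} \<and> 0 < s j \<longrightarrow> s r \<le> s j"
      using ex_has_least_nat[of "\<lambda>j. j \<in> {1..k} \<and> 0 < s j" i s] i by blast
    have "\<forall>c. 1 \<le> c \<longrightarrow> (if c \<le> s r then 1 else 0) + Vv {1..k} (s(r := s r - 1)) c ?w \<le> Vv {1..k} s c w"
    proof (intro allI impI)
      fix c :: nat assume c: "1 \<le> c"
      show "(if c \<le> s r then 1 else 0) + Vv {1..k} (s(r := s r - 1)) c ?w \<le> Vv {1..k} s c w"
        by (rule L_step[where A="{1..k}" and r=r and s=s and c=c]) (use r mn c True in auto)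
    qed
    hence "\<forall>c. 1 \<le> c \<longrightarrow> (if w 1 \<and> c \<le> s r then 1 else 0) + Vv {1..k} (s(r := s r - 1)) c ?w \<le> Vv {1..k} s c w"
      using True by simp
    thus ?thesis using r by blast
  next
    case False
    obtain r where r: "r \<in> {1..k}" "0 < s r"
      and K: "\<forall>c. 1 \<le> c \<longrightarrow> Vv {1..k} (s(r := s r - 1)) c ?w \<le> Vv {1..k} s c w"
      using Kgen[where k=k and s=s and w=w, OF ne False] by blast
    hence "\<forall>c. 1 \<le> c \<longrightarrow> (if w 1 \<and> c \<le> s r then 1 else 0) + Vv {1..k} (s(r := s r - 1)) c ?w \<le> Vv {1..k} s c w"
      using False by simp
    thus ?thesis using r by blast
  qed
  then obtain r where r: "r \<in> {1..k}" "0 < s r"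
    and stp: "\<forall>c. 1 \<le> c \<longrightarrow> (if w 1 \<and> c \<le> s r then 1 else 0) + Vv {1..k} (s(r := s r - 1)) c ?w \<le> Vv {1..k} s c w"
    by blast
  let ?s = "s(r := s r - 1)"
  have "sum s {1..k} = Suc (sum ?s {1..k})" using sum_dec[of "{1..k}" r s] r by simp
  hence Ns: "N = sum ?s {1..k}" using Suc.prems by simp
  obtain y' where y': "valid_seq k ?s N y'" and yb: "\<forall>c. 1 \<le> c \<longrightarrow> Nc ?s y' ?w c N \<le> Vv {1..k} ?s c ?w"
    using Suc.IH[OF Ns] by blast
  define y where "y t = (if t = 1 then r else y' (t - 1))" for t
  have vy: "valid_seq k s (Suc N) y" unfolding y_def by (rule valid_cons[OF y' r])
  have "\<forall>c. 1 \<le> c \<longrightarrow> Nc s y w c (Suc N) \<le> Vv {1..k} s c w"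
  proof (intro allI impI)
    fix c :: nat assume c: "1 \<le> c"
    have "Nc s y w c (Suc N) = (if w 1 \<and> c \<le> s r then 1 else 0) + Nc ?s (\<lambda>u. y (Suc u)) ?w c N"
      using Nc_shift[of s y w c N] unfolding y_def by simp
    also have "Nc ?s (\<lambda>u. y (Suc u)) ?w c N = Nc ?s y' ?w c N"
      by (rule Nc_cong) (simp add: y_def)
    also have "(if w 1 \<and> c \<le> s r then 1 else 0) + Nc ?s y' ?w c N \<le> Vv {1..k} s c w"
      using yb c stp by (meson add_le_mono le_refl order_trans)
    finally show "Nc s y w c (Suc N) \<le> Vv {1..k} s c w" .
  qed
  with vy show ?case by blast
qed



lemma sum_shift1: "(\<Sum>t=1..Suc N. f t) = f 1 + (\<Sum>t=1..N. f (Suc t))"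
proof -
  have "(\<Sum>t=1..Suc N. f t) = f 1 + (\<Sum>t=Suc 1..Suc N. f t)" by (rule sum.atLeast_Suc_atMost) simp
  also have "(\<Sum>t=Suc 1..Suc N. f t) = (\<Sum>t=1..N. f (Suc t))" by (rule sum.shift_bounds_cl_Suc_ivl)
  finally show ?thesis .
qed

lemma sum_ranks:
  fixes G :: "nat \<Rightarrow> real"
  shows "valid_seq k s N y \<Longrightarrow> (\<Sum>t=1..N. G (rem_cap s y t)) = (\<Sum>r=1..k. \<Sum>j=1..s r. G j)"
proof (induction N arbitrary: s y)
  case 0
  have "\<forall>r\<in>{1..k}. s r = 0" using 0 unfolding valid_seq_def by auto
  thus ?case by simp
next
  case (Suc N)
  let ?r = "y 1"
  let ?s = "s(?r := s ?r - 1)" and ?y = "\<lambda>u. y (Suc u)"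
  have v: "valid_seq k ?s N ?y" "?r \<in> {1..k}" "0 < s ?r" using valid_shift[OF Suc.prems] by auto
  have "(\<Sum>t=1..Suc N. G (rem_cap s y t)) = G (s ?r) + (\<Sum>t=1..N. G (rem_cap s y (Suc t)))"
    unfolding sum_shift1 rem_cap_1 ..
  also have "(\<Sum>t=1..N. G (rem_cap s y (Suc t))) = (\<Sum>t=1..N. G (rem_cap ?s ?y t))"
    by (rule sum.cong) (auto simp: rem_cap_shift)
  also have "\<dots> = (\<Sum>r=1..k. \<Sum>j=1..?s r. G j)" by (rule Suc.IH[OF v(1)])
  also have "G (s ?r) + \<dots> = (\<Sum>r=1..k. \<Sum>j=1..s r. G j)"
  proof -
    have a: "(\<Sum>r=1..k. \<Sum>j=1..?s r. G j) = (\<Sum>j=1..?s ?r. G j) + (\<Sum>r\<in>{1..k} - {?r}. \<Sum>j=1..?s r. G j)"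
      using v(2) by (simp add: sum.remove)
    have b: "(\<Sum>r=1..k. \<Sum>j=1..s r. G j) = (\<Sum>j=1..s ?r. G j) + (\<Sum>r\<in>{1..k} - {?r}. \<Sum>j=1..s r. G j)"
      using v(2) by (simp add: sum.remove)
    have c: "(\<Sum>r\<in>{1..k} - {?r}. \<Sum>j=1..?s r. G j) = (\<Sum>r\<in>{1..k} - {?r}. \<Sum>j=1..s r. G j)"
      by (rule sum.cong) auto
    have d: "(\<Sum>j=1..s ?r. G j) = G (s ?r) + (\<Sum>j=1..s ?r - 1. G j)"
    proof -
      obtain p where p: "s ?r = Suc p" using v(3) by (cases "s ?r") auto
      show ?thesis unfolding p by simp
    qed
    show ?thesis using a b c d by simp
  qed
  finally show ?case .
qed

lemma telescope:
  fixes g :: "nat \<Rightarrow> real"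
  shows "q \<le> M \<Longrightarrow> g q = g 0 + (\<Sum>c=1..M. if c \<le> q then g c - g (c - 1) else 0)"
proof -
  assume qM: "q \<le> M"
  have "(\<Sum>c=1..M. if c \<le> q then g c - g (c - 1) else 0) = (\<Sum>c\<in>{c\<in>{1..M}. c \<le> q}. g c - g (c - 1))"
    by (rule sum.inter_filter[symmetric]) simp
  also have "{c\<in>{1..M}. c \<le> q} = {1..q}" using qM by auto
  also have "(\<Sum>c=1..q. g c - g (c - 1)) = g q - g 0"
    by (induction q) (auto simp: sum.atLeast1_atMost_eq)
  finally show ?thesis by simp
qed



lemma cost_formula:
  fixes g :: "nat \<Rightarrow> real" and T :: "nat \<Rightarrow> real"
  assumes v: "valid_seq k m n y" and nsum: "n = (\<Sum>r=1..k. m r)"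
    and T2: "\<forall>i\<in>{1..n}. T i = H \<or> T i = L" and T1: "T 1 = H" and HL: "H < L"
  shows "COST g m n T y = H * (\<Sum>r=1..k. \<Sum>j=1..m r. g j)
     + (L - H) * (real (card {t\<in>{1..n}. T 1 < T t}) * g 0
         + (\<Sum>c=1..n. (g c - g (c - 1)) * real (Nc m y (\<lambda>i. T 1 < T i) c n)))"
proof -
  define w where "w i = (T 1 < T i)" for i
  define q where "q t = rem_cap m y t" for t
  define Ls where "Ls = {t\<in>{1..n}. w t}"
  have Tt: "T t = H + (L - H) * (if w t then 1 else 0)" if "t \<in> {1..n}" for t
  proof -
    have "T t = H \<or> T t = L" using T2 that by blast
    thus ?thesis using T1 HL unfolding w_def by auto
  qed
  have "COST g m n T y = (\<Sum>t=1..n. g (q t) * T t)" unfolding COST_def q_def ..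
  also have "\<dots> = (\<Sum>t=1..n. H * g (q t) + (L - H) * (if w t then g (q t) else 0))"
    by (rule sum.cong) (auto simp: Tt algebra_simps)
  also have "\<dots> = H * (\<Sum>t=1..n. g (q t)) + (L - H) * (\<Sum>t=1..n. if w t then g (q t) else 0)"
    by (simp add: sum.distrib sum_distrib_left)
  also have "(\<Sum>t=1..n. g (q t)) = (\<Sum>r=1..k. \<Sum>j=1..m r. g j)" unfolding q_def by (rule sum_ranks[OF v])
  also have "(\<Sum>t=1..n. if w t then g (q t) else 0) = (\<Sum>t\<in>Ls. g (q t))"
    unfolding Ls_def by (rule sum.inter_filter[symmetric]) simp
  also have "(\<Sum>t\<in>Ls. g (q t)) = (\<Sum>t\<in>Ls. g 0 + (\<Sum>c=1..n. if c \<le> q t then g c - g (c - 1) else 0))"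
  proof (rule sum.cong[OF refl])
    fix t assume t: "t \<in> Ls"
    have yt: "y t \<in> {1..k}" using v t unfolding valid_seq_def Ls_def by auto
    have "q t \<le> m (y t)" unfolding q_def rem_cap_def by simp
    also have "m (y t) \<le> n" unfolding nsum using yt by (intro member_le_sum) auto
    finally show "g (q t) = g 0 + (\<Sum>c=1..n. if c \<le> q t then g c - g (c - 1) else 0)"
      by (rule telescope)
  qed
  also have "\<dots> = real (card Ls) * g 0 + (\<Sum>c=1..n. \<Sum>t\<in>Ls. if c \<le> q t then g c - g (c - 1) else 0)"
    by (simp add: sum.distrib sum.swap[of _ Ls])
  also have "(\<Sum>c=1..n. \<Sum>t\<in>Ls. if c \<le> q t then g c - g (c - 1) else 0)
      = (\<Sum>c=1..n. (g c - g (c - 1)) * real (Nc m y w c n))"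
  proof (rule sum.cong[OF refl])
    fix c
    have "(\<Sum>t\<in>Ls. if c \<le> q t then g c - g (c - 1) else 0) = (\<Sum>t\<in>{t\<in>Ls. c \<le> q t}. g c - g (c - 1))"
      unfolding Ls_def by (rule sum.inter_filter[symmetric]) simp
    also have "{t\<in>Ls. c \<le> q t} = {t\<in>{1..n}. w t \<and> c \<le> rem_cap m y t}" unfolding Ls_def q_def by auto
    finally show "(\<Sum>t\<in>Ls. if c \<le> q t then g c - g (c - 1) else 0) = (g c - g (c - 1)) * real (Nc m y w c n)"
      unfolding Nc_def by simp
  qed
  finally show ?thesis unfolding Ls_def w_def .
qed



theorem lemma7:
  fixes k n :: nat and m :: "nat \<Rightarrow> nat" and T :: "nat \<Rightarrow> real"
    and g :: "nat \<Rightarrow> real" and H L :: real and x :: "nat \<Rightarrow> nat"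
  assumes "k \<ge> 1"
    and "0 < m 1"
    and "\<forall>i j. 1 \<le> i \<and> i \<le> j \<and> j \<le> k \<longrightarrow> m i \<le> m j"
    and "n = (\<Sum>r=1..k. m r)"
    and "0 \<le> H" and "H < L"
    and "\<forall>i\<in>{1..n}. T i = H \<or> T i = L"
    and "T 1 = H"
    and "mono g" and "\<forall>q. 0 \<le> g q"
    and "valid_seq k m n x"
    and "x 1 \<noteq> TA k m T"
  shows "\<exists>xs. valid_seq k m n xs \<and> xs 1 = TA k m T \<and> COST g m n T xs \<le> COST g m n T x"
proof -
  note k = assms(1) and pos = assms(2) and srt = assms(3) and nsum = assms(4) and HL = assms(6)
    and T2 = assms(7) and T1 = assms(8) and mg = assms(9) and vx = assms(11)
  define w where "w i = (T 1 < T i)" for i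
  define b where "b = TA k m T"
  have bw: "b = TAw k m w" unfolding b_def w_def by (rule TA_eq)
  have w1: "\<not> w 1" unfolding w_def by simp
  have bA: "b \<in> {1..k}" unfolding bw using TAw_props[where k=k and m=m and w=w, OF k pos] by simp
  have posb: "0 < m b" using pos srt bA by (metis atLeastAtMost_iff le_refl less_le_trans)
  let ?s = "m(b := m b - 1)" and ?w = "\<lambda>i. w (Suc i)"
  define N where "N = sum ?s {1..k}"
  have nN: "n = Suc N" unfolding N_def nsum using sum_dec[of "{1..k}" b m] bA posb by simp
  have KK: "\<forall>c. 1 \<le> c \<longrightarrow> Vv {1..k} ?s c ?w \<le> Vv {1..k} m c w"
    unfolding bw using K[where k=k and m=m and w=w, OF k pos srt w1] by blast
  obtain y' where y': "valid_seq k ?s N y'" and yb: "\<forall>c. 1 \<le> c \<longrightarrow> Nc ?s y' ?w c N \<le> Vv {1..k} ?s c ?w"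
    using universal[of N ?s k ?w] unfolding N_def by blast
  define xs where "xs t = (if t = 1 then b else y' (t - 1))" for t
  have vxs: "valid_seq k m n xs" unfolding nN xs_def by (rule valid_cons[OF y' bA posb])
  have xs1: "xs 1 = b" unfolding xs_def by simp
  have dom: "Nc m xs w c n \<le> Nc m x w c n" if c: "1 \<le> c" for c
  proof -
    have "Nc m xs w c n = Nc ?s (\<lambda>u. xs (Suc u)) ?w c N"
      using Nc_shift[of m xs w c N] w1 xs1 unfolding nN by simp
    also have "\<dots> = Nc ?s y' ?w c N" by (rule Nc_cong) (simp add: xs_def)
    also have "\<dots> \<le> Vv {1..k} ?s c ?w" using yb c by simp
    also have "\<dots> \<le> Vv {1..k} m c w" using KK c by simp
    also have "\<dots> \<le> Nc m x w c n" by (rule lower_bound[OF vx c])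
    finally show ?thesis .
  qed
  have "COST g m n T xs \<le> COST g m n T x"
  proof -
    have cx: "COST g m n T x = H * (\<Sum>r=1..k. \<Sum>j=1..m r. g j)
     + (L - H) * (real (card {t\<in>{1..n}. T 1 < T t}) * g 0
         + (\<Sum>c=1..n. (g c - g (c - 1)) * real (Nc m x w c n)))"
      unfolding w_def by (rule cost_formula[OF vx nsum T2 T1 HL])
    have cxs: "COST g m n T xs = H * (\<Sum>r=1..k. \<Sum>j=1..m r. g j)
     + (L - H) * (real (card {t\<in>{1..n}. T 1 < T t}) * g 0
         + (\<Sum>c=1..n. (g c - g (c - 1)) * real (Nc m xs w c n)))"
      unfolding w_def by (rule cost_formula[OF vxs nsum T2 T1 HL])
    have "(\<Sum>c=1..n. (g c - g (c - 1)) * real (Nc m xs w c n)) \<le> (\<Sum>c=1..n. (g c - g (c - 1)) * real (Nc m x w c n))"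
    proof (rule sum_mono)
      fix c assume c: "c \<in> {1..n}"
      have "real (Nc m xs w c n) \<le> real (Nc m x w c n)" using dom c by simp
      moreover have "0 \<le> g c - g (c - 1)" using mg unfolding mono_def by simp
      ultimately show "(g c - g (c - 1)) * real (Nc m xs w c n) \<le> (g c - g (c - 1)) * real (Nc m x w c n)"
        by (rule mult_left_mono)
    qed
    thus ?thesis unfolding cx cxs using HL by (simp add: mult_left_mono)
  qed
  thus ?thesis using vxs xs1 unfolding b_def by blast
qed



end
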